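(* Let $\sigma>0$, $r,q\in\mathbb{R}$, $T>0$, $\beta\in\mathbb{R}$, $i\in\mathbb{R}$, $L>0$, $K\ge 0$, $\tau_1,\tau_2\in\mathbb{R}$ and $\tau_3>0$. Consider the terminal value problem \[ \frac{\partial V}{\partial t}+\frac12\sigma^2X^2\frac{\partial^2V}{\partial X^2}+(r-q)X\frac{\partial V}{\partial X}-rV=0,\quad 0<t<T,\ X>0, \] \[ V(X,T)=X^{\beta}\,N\!\left[\delta\!\left(\tfrac{X^{i}}{L},\tau_1,\tau_2,\tau_3\right)\right]\cdot 1\{X>K\}. \] Its solution has the representation \[ V(X,\tau;\tau_1,\tau_2,\tau_3,i,L,K)=X^{\beta}e^{\mu(\beta)\tau}N_2(a_1,a_2;\rho), \] where $\tau=T-t$, \[ \mu(\beta)=-r+\beta\Big[r-q-\frac{\sigma^2}{2}(1-\beta)\Big],\qquad \rho=i\sqrt{\frac{\tau}{\tau_3+i^2\tau}}, \] \[ a_2=\Big[\ln\frac{X}{K}+\Big(r-q-\frac{\sigma^2}{2}\Big)\tau+\sigma^2\beta\tau\Big](\sigma\sqrt{\tau})^{-1}=\delta(X/K,\tau,\beta\tau,\tau), \] \[ a_1=\Big[\ln\frac{X^{i}}{L}+\Big(r-q-\frac{\sigma^2}{2}\Big)(\tau_1+i\tau)+\sigma^2(\tau_2+i\beta\tau)\Big]\big(\sigma\sqrt{\tau_3+i^2\tau}\big)^{-1}=\delta\big(X^{i}/L,\ \tau_1+i\tau,\ \tau_2+i\beta\tau,\ \tau_3+i^2\tau\big). \]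
   Context: $N(x)=\frac{1}{\sqrt{2\pi}}\int_{-\infty}^{x}e^{-t^2/2}\,dt$ is the standard normal distribution function, and \[ N_2(a_1,a_2;\rho)=\frac{1}{2\pi\sqrt{1-\rho^2}}\int_{-\infty}^{a_1}\int_{-\infty}^{a_2}\exp\!\Big(-\frac{y_1^2-2\rho y_1y_2+y_2^2}{2(1-\rho^2)}\Big)\,dy_2\,dy_1 \] is the bivariate standard normal distribution function with correlation $\rho$. For $y>0$ and real $\tau_1,\tau_2$, $\tau_3>0$, the notation $\delta$ means \[ \delta(y,\tau_1,\tau_2,\tau_3)=\Big[\ln y+\Big(r-q-\frac{\sigma^2}{2}\Big)\tau_1+\sigma^2\tau_2\Big](\sigma\sqrt{\tau_3})^{-1}. \] $1\{\cdot\}$ denotes the indicator function. *)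

theory Defs
  imports "HOL-Analysis.Analysis"
begin

definition Ncdf :: "real \<Rightarrow> real" where
  "Ncdf x = integral {..x} (\<lambda>t. exp (- t\<^sup>2 / 2) / sqrt (2 * pi))"

definition N2 :: "real \<Rightarrow> real \<Rightarrow> real \<Rightarrow> real" where
  "N2 a1 a2 \<rho> = integral ({..a1} \<times> {..a2})
     (\<lambda>(y1, y2). exp (- (y1\<^sup>2 - 2 * \<rho> * y1 * y2 + y2\<^sup>2) / (2 * (1 - \<rho>\<^sup>2)))
                  / (2 * pi * sqrt (1 - \<rho>\<^sup>2)))"

definition delta :: "real \<Rightarrow> real \<Rightarrow> real \<Rightarrow> real \<Rightarrow> real \<Rightarrow> real \<Rightarrow> real \<Rightarrow> real" where
  "delta r q \<sigma> y \<tau>1 \<tau>2 \<tau>3 =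
     (ln y + (r - q - \<sigma>\<^sup>2 / 2) * \<tau>1 + \<sigma>\<^sup>2 * \<tau>2) / (\<sigma> * sqrt \<tau>3)"

definition mu :: "real \<Rightarrow> real \<Rightarrow> real \<Rightarrow> real \<Rightarrow> real" where
  "mu r q \<sigma> \<beta> = - r + \<beta> * (r - q - \<sigma>\<^sup>2 / 2 * (1 - \<beta>))"

text \<open>The claimed solution, as a function of X and time-to-maturity tau.
  For K = 0 the indicator is identically 1 and a2 = +infinity, so
  N2(a1, +infinity; rho) = N(a1) (convention made explicit).\<close>
definition Vsol :: "real \<Rightarrow> real \<Rightarrow> real \<Rightarrow> real \<Rightarrow> real \<Rightarrow> real \<Rightarrow> real \<Rightarrow> real \<Rightarrow> real \<Rightarrow> real
                    \<Rightarrow> real \<Rightarrow> real \<Rightarrow> real" where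
  "Vsol r q \<sigma> \<beta> i L K \<tau>1 \<tau>2 \<tau>3 X \<tau> =
     (let \<rho> = i * sqrt (\<tau> / (\<tau>3 + i\<^sup>2 * \<tau>));
          a1 = delta r q \<sigma> (X powr i / L) (\<tau>1 + i * \<tau>) (\<tau>2 + i * \<beta> * \<tau>) (\<tau>3 + i\<^sup>2 * \<tau>);
          a2 = delta r q \<sigma> (X / K) \<tau> (\<beta> * \<tau>) \<tau>
      in X powr \<beta> * exp (mu r q \<sigma> \<beta> * \<tau>) * (if K = 0 then Ncdf a1 else N2 a1 a2 \<rho>))"

definition payoff :: "real \<Rightarrow> real \<Rightarrow> real \<Rightarrow> real \<Rightarrow> real \<Rightarrow> real \<Rightarrow> real \<Rightarrow> real \<Rightarrow> real \<Rightarrow> real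
                    \<Rightarrow> real \<Rightarrow> real" where
  "payoff r q \<sigma> \<beta> i L K \<tau>1 \<tau>2 \<tau>3 X =
     X powr \<beta> * Ncdf (delta r q \<sigma> (X powr i / L) \<tau>1 \<tau>2 \<tau>3) * (if X > K then 1 else 0)"

end

theory Submission
  imports Defs "HOL-Probability.Probability"
begin

definition phi :: "real \<Rightarrow> real" where
  "phi t = exp (- t\<^sup>2 / 2) / sqrt (2 * pi)"

lemma Ncdf_phi: "Ncdf x = integral {..x} phi"
  unfolding Ncdf_def phi_def[abs_def] by simp

lemma phi_pos: "phi t > 0"
  unfolding phi_def by simp

lemma sqrt2pi_ge: "sqrt (2 * pi) \<ge> 2"
proof -
  have "(4::real) \<le> 2 * pi" using pi_gt3 by linarith
  then have "sqrt 4 \<le> sqrt (2 * pi)" by (rule real_sqrt_le_mono)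
  then show ?thesis by simp
qed

lemma phi_le: "phi t \<le> 1/2"
proof -
  have "exp (- t\<^sup>2 / 2) \<le> 1" by simp
  then have "exp (- t\<^sup>2 / 2) * 2 \<le> sqrt (2 * pi)" using sqrt2pi_ge by linarith
  then show ?thesis unfolding phi_def using sqrt2pi_ge
    by (simp add: divide_simps)
qed

lemma phi_std: "phi = std_normal_density"
  by (rule ext) (simp add: phi_def std_normal_density_def)

lemma DERIV_phi: "(phi has_real_derivative (- t * phi t)) (at t)"
  unfolding phi_def
  by (auto intro!: derivative_eq_intros simp: power2_eq_square field_simps)

lemma abs_le_exp_half: "\<bar>t::real\<bar> \<le> exp (t\<^sup>2 / 2)"
proof -
  have "1 + t\<^sup>2/2 \<le> exp (t\<^sup>2 / 2)" using exp_ge_add_one_self[of "t\<^sup>2/2"] by simp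
  moreover have "\<bar>t\<bar> \<le> 1 + t\<^sup>2/2"
    using sum_squares_ge_zero[of "\<bar>t\<bar> - 1" 0]
    by (cases "t \<ge> 0") (auto simp: power2_eq_square algebra_simps)
  ultimately show ?thesis by linarith
qed

lemma exp_half_nonneg_times: "exp (- (t::real)\<^sup>2 / 2) * exp (t\<^sup>2 / 2) = 1"
  by (simp add: exp_add[symmetric])

lemma t_phi_bound: "\<bar>t * phi t\<bar> \<le> 1"
proof -
  have "\<bar>t\<bar> * exp (- t\<^sup>2 / 2) \<le> exp (t\<^sup>2 / 2) * exp (- t\<^sup>2 / 2)"
    using abs_le_exp_half by (intro mult_right_mono) auto
  also have "\<dots> = 1" by (simp add: exp_add[symmetric])
  finally have "\<bar>t\<bar> * exp (- t\<^sup>2 / 2) \<le> 1" .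
  then show ?thesis unfolding phi_def using sqrt2pi_ge
    by (simp add: abs_mult divide_simps) 
qed

lemma t2_phi_bound: "\<bar>((t::real)\<^sup>2 - 1) * phi t\<bar> \<le> 1"
proof -
  have e: "1 + t\<^sup>2/2 + (t\<^sup>2/2)\<^sup>2 / 2 \<le> exp (t\<^sup>2 / 2)"
    by (rule exp_lower_Taylor_quadratic) simp
  have "\<bar>t\<^sup>2 - 1\<bar> \<le> 1 + t\<^sup>2/2 + (t\<^sup>2/2)\<^sup>2 / 2"
  proof (cases "t\<^sup>2 \<ge> 1")
    case True
    have "0 \<le> (t\<^sup>2 - 2)\<^sup>2 + 12" by simp
    then show ?thesis using True by (simp add: power2_eq_square algebra_simps)
  next
    case False
    have "0 \<le> t\<^sup>2" by simp
    moreover have "0 \<le> (t\<^sup>2 / 2)\<^sup>2 / 2" by simp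
    moreover have "\<bar>t\<^sup>2 - 1\<bar> = 1 - t\<^sup>2" using False by simp
    ultimately show ?thesis by linarith
  qed
  with e have "\<bar>t\<^sup>2 - 1\<bar> \<le> exp (t\<^sup>2 / 2)" by linarith
  then have "\<bar>t\<^sup>2 - 1\<bar> * exp (- t\<^sup>2 / 2) \<le> exp (t\<^sup>2 / 2) * exp (- t\<^sup>2 / 2)"
    by (intro mult_right_mono) auto
  also have "\<dots> = 1" by (simp add: exp_add[symmetric])
  finally have "\<bar>t\<^sup>2 - 1\<bar> * exp (- t\<^sup>2 / 2) \<le> 1" .
  then show ?thesis unfolding phi_def using sqrt2pi_ge
    by (simp add: abs_mult divide_simps)
qed

lemma phi_moment_set_integrable:
  assumes "S \<in> sets borel"
  shows "set_integrable lborel S (\<lambda>y. phi y * \<bar>y\<bar> ^ k)"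
  unfolding set_integrable_def phi_std
  using assms by (intro integrable_mult_indicator integrable_std_normal_moment_abs) auto

lemma phi_moment_integrable_on:
  assumes "S \<in> sets borel"
  shows "(\<lambda>y. phi y * \<bar>y\<bar> ^ k) integrable_on S"
  using set_borel_integral_eq_integral(1)[OF phi_moment_set_integrable[OF assms]] .

lemma phi_integrable_on:
  assumes "S \<in> sets borel"
  shows "phi integrable_on S"
  using phi_moment_integrable_on[OF assms, of 0] by simp

lemma phi_has_integral_UNIV: "(phi has_integral 1) UNIV"
proof -
  have "(phi has_integral (\<integral>x. phi x \<partial>lborel)) UNIV"
    unfolding phi_std by (intro has_integral_integral_lborel) simp
  moreover have "(\<integral>x. phi x \<partial>lborel) = 1" unfolding phi_std by simp
  ultimately show ?thesis by simp
qed

lemma dom_integrable: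
  fixes f g :: "real \<Rightarrow> real"
  assumes "continuous_on UNIV f" "S \<in> sets lebesgue" "g integrable_on S" "\<And>y. y \<in> S \<Longrightarrow> \<bar>f y\<bar> \<le> g y"
  shows "f integrable_on S"
  by (rule measurable_bounded_by_integrable_imp_integrable[OF _ assms(3) _ assms(2)])
     (auto intro: continuous_imp_measurable_on_sets_lebesgue continuous_on_subset[OF assms(1)] assms(2,4))

lemma continuous_phi: "continuous_on UNIV phi"
  unfolding phi_def by (intro continuous_intros) auto

lemma isCont_phi: "isCont phi x"
  using continuous_phi by (simp add: continuous_on_eq_continuous_at)

lemma lip_from_deriv:
  fixes f f' :: "real \<Rightarrow> real"
  assumes der: "\<And>x. min a b \<le> x \<Longrightarrow> x \<le> max a b \<Longrightarrow> (f has_real_derivative f' x) (at x)"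
    and bnd: "\<And>x. min a b \<le> x \<Longrightarrow> x \<le> max a b \<Longrightarrow> \<bar>f' x\<bar> \<le> M"
  shows "\<bar>f b - f a\<bar> \<le> M * \<bar>b - a\<bar>"
proof (cases a b rule: linorder_cases)
  case less
  then obtain z where z: "a < z" "z < b" "f b - f a = (b - a) * f' z"
    using MVT2[of a b f f'] der by auto
  then have "\<bar>f b - f a\<bar> = \<bar>b - a\<bar> * \<bar>f' z\<bar>" by (simp add: abs_mult)
  also have "\<dots> \<le> \<bar>b - a\<bar> * M" using bnd[of z] z less by (intro mult_left_mono) auto
  finally show ?thesis by (simp add: mult.commute)
next
  case equal then show ?thesis by simp
next
  case greater
  then obtain z where z: "b < z" "z < a" "f a - f b = (a - b) * f' z"
    using MVT2[of b a f f'] der by auto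
  then have "\<bar>f b - f a\<bar> = \<bar>b - a\<bar> * \<bar>f' z\<bar>" by (simp add: abs_mult abs_minus_commute)
  also have "\<dots> \<le> \<bar>b - a\<bar> * M" using bnd[of z] z greater by (intro mult_left_mono) auto
  finally show ?thesis by (simp add: mult.commute)
qed

lemma taylor2_bound:
  fixes h h1 h2 :: "real \<Rightarrow> real"
  assumes d1: "\<And>q. \<bar>q - p0\<bar> < d \<Longrightarrow> (h has_real_derivative h1 q) (at q)"
    and d2: "\<And>q. \<bar>q - p0\<bar> < d \<Longrightarrow> (h1 has_real_derivative h2 q) (at q)"
    and bnd: "\<And>q. \<bar>q - p0\<bar> < d \<Longrightarrow> \<bar>h2 q\<bar> \<le> G"
    and p: "\<bar>p - p0\<bar> < d"
  shows "\<bar>h p - h p0 - (p - p0) * h1 p0\<bar> \<le> G * (p - p0)\<^sup>2"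
proof -
  have G: "0 \<le> G" using bnd[of p0] p by (smt (verit))
  have seg: "\<bar>q - p0\<bar> < d" if "min p0 p \<le> q" "q \<le> max p0 p" for q
    using that p by (auto simp: min_def max_def split: if_splits)
  have segle: "\<bar>q - p0\<bar> \<le> \<bar>p - p0\<bar>" if "min p0 p \<le> q" "q \<le> max p0 p" for q
    using that by (auto simp: min_def max_def split: if_splits)
  have lip1: "\<bar>h1 q - h1 p0\<bar> \<le> G * \<bar>q - p0\<bar>" if "min p0 p \<le> q" "q \<le> max p0 p" for q
  proof (rule lip_from_deriv[of p0 q h1 h2])
    fix x assume "min p0 q \<le> x" "x \<le> max p0 q"
    then have "\<bar>x - p0\<bar> < d" using seg that by (smt (verit))
    then show "(h1 has_real_derivative h2 x) (at x)" "\<bar>h2 x\<bar> \<le> G" using d2 bnd by auto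
  qed
  let ?e = "\<lambda>q. h q - h p0 - (q - p0) * h1 p0"
  have "\<bar>?e p - ?e p0\<bar> \<le> (G * \<bar>p - p0\<bar>) * \<bar>p - p0\<bar>"
  proof (rule lip_from_deriv[of p0 p ?e "\<lambda>q. h1 q - h1 p0"])
    fix x assume x: "min p0 p \<le> x" "x \<le> max p0 p"
    show "(?e has_real_derivative h1 x - h1 p0) (at x)"
      using d1[OF seg[OF x]] by (auto intro!: derivative_eq_intros)
    show "\<bar>h1 x - h1 p0\<bar> \<le> G * \<bar>p - p0\<bar>"
      using lip1[OF x] segle[OF x] G by (smt (verit) mult_left_mono)
  qed
  then show ?thesis by (simp add: power2_eq_square abs_mult_self_eq mult.assoc)
qed

lemma deriv_quadratic:
  fixes F :: "real \<Rightarrow> real"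
  assumes "d > 0" and bnd: "\<And>p. \<bar>p - p0\<bar> < d \<Longrightarrow> \<bar>F p - F p0 - (p - p0) * D\<bar> \<le> C * (p - p0)\<^sup>2"
  shows "(F has_real_derivative D) (at p0)"
proof -
  have ev: "eventually (\<lambda>p. norm ((F p - F p0) / (p - p0) - D) \<le> \<bar>C\<bar> * \<bar>p - p0\<bar>) (at p0)"
  proof -
    have "eventually (\<lambda>p. \<bar>p - p0\<bar> < d \<and> p \<noteq> p0) (at p0)"
      using \<open>d > 0\<close> by (auto simp: eventually_at dist_real_def intro!: exI[of _ d])
    then show ?thesis
    proof (rule eventually_mono)
      fix p assume p: "\<bar>p - p0\<bar> < d \<and> p \<noteq> p0"
      then have nz: "p - p0 \<noteq> 0" by auto
      have "(F p - F p0) / (p - p0) - D = (F p - F p0 - (p - p0) * D) / (p - p0)"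
        using nz by (simp add: field_simps)
      then have "norm ((F p - F p0) / (p - p0) - D) = \<bar>F p - F p0 - (p - p0) * D\<bar> / \<bar>p - p0\<bar>"
        by (simp add: abs_divide)
      also have "\<dots> \<le> C * (p - p0)\<^sup>2 / \<bar>p - p0\<bar>"
        using bnd p nz by (intro divide_right_mono) auto
      also have "\<dots> = C * \<bar>p - p0\<bar>" using nz by (simp add: power2_eq_square field_simps abs_mult_self_eq)
      also have "\<dots> \<le> \<bar>C\<bar> * \<bar>p - p0\<bar>" by (intro mult_right_mono) auto
      finally show "norm ((F p - F p0) / (p - p0) - D) \<le> \<bar>C\<bar> * \<bar>p - p0\<bar>" .
    qed
  qed
  have "((\<lambda>p. \<bar>C\<bar> * \<bar>p - p0\<bar>) \<longlongrightarrow> \<bar>C\<bar> * \<bar>p0 - p0\<bar>) (at p0)"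
    by (intro tendsto_intros)
  then have "((\<lambda>p. \<bar>C\<bar> * \<bar>p - p0\<bar>) \<longlongrightarrow> 0) (at p0)" by simp
  from Lim_null_comparison[OF ev this]
  have "((\<lambda>p. (F p - F p0) / (p - p0) - D) \<longlongrightarrow> 0) (at p0)" .
  then have "((\<lambda>p. (F p - F p0) / (p - p0) - D + D) \<longlongrightarrow> 0 + D) (at p0)"
    by (intro tendsto_intros)
  then have "((\<lambda>p. (F p - F p0) / (p - p0)) \<longlongrightarrow> D) (at p0)" by simp
  then show ?thesis by (simp add: has_field_derivative_iff)
qed

lemma deriv_small:
  fixes R b :: "real \<Rightarrow> real"
  assumes "(b \<longlongrightarrow> b p0) (at p0)" "R p0 = 0" "d > 0"
    and bnd: "\<And>p. \<bar>p - p0\<bar> < d \<Longrightarrow> \<bar>R p\<bar> \<le> C * \<bar>p - p0\<bar> * \<bar>b p - b p0\<bar>"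
  shows "(R has_real_derivative 0) (at p0)"
proof -
  have ev: "eventually (\<lambda>p. norm ((R p - R p0) / (p - p0) - 0) \<le> \<bar>C\<bar> * \<bar>b p - b p0\<bar>) (at p0)"
  proof -
    have "eventually (\<lambda>p. \<bar>p - p0\<bar> < d \<and> p \<noteq> p0) (at p0)"
      using \<open>d > 0\<close> by (auto simp: eventually_at dist_real_def intro!: exI[of _ d])
    then show ?thesis
    proof (rule eventually_mono)
      fix p assume p: "\<bar>p - p0\<bar> < d \<and> p \<noteq> p0"
      then have nz: "\<bar>p - p0\<bar> > 0" by auto
      have "norm ((R p - R p0) / (p - p0) - 0) = \<bar>R p\<bar> / \<bar>p - p0\<bar>"
        using assms(2) by (simp add: abs_divide)
      also have "\<dots> \<le> C * \<bar>p - p0\<bar> * \<bar>b p - b p0\<bar> / \<bar>p - p0\<bar>"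
        using bnd p nz by (intro divide_right_mono) auto
      also have "\<dots> = C * \<bar>b p - b p0\<bar>" using nz by (simp add: field_simps)
      also have "\<dots> \<le> \<bar>C\<bar> * \<bar>b p - b p0\<bar>" by (intro mult_right_mono) auto
      finally show "norm ((R p - R p0) / (p - p0) - 0) \<le> \<bar>C\<bar> * \<bar>b p - b p0\<bar>" .
    qed
  qed
  have "((\<lambda>p. \<bar>C\<bar> * \<bar>b p - b p0\<bar>) \<longlongrightarrow> \<bar>C\<bar> * \<bar>b p0 - b p0\<bar>) (at p0)"
    by (intro tendsto_intros assms(1))
  then have "((\<lambda>p. \<bar>C\<bar> * \<bar>b p - b p0\<bar>) \<longlongrightarrow> 0) (at p0)" by simp
  from Lim_null_comparison[OF ev this]
  have "((\<lambda>p. (R p - R p0) / (p - p0) - 0) \<longlongrightarrow> 0) (at p0)" .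
  then show ?thesis by (simp add: has_field_derivative_iff)
qed

lemma halfline_split:
  fixes g :: "real \<Rightarrow> real"
  assumes "continuous_on UNIV g" "\<And>u. g integrable_on {..u}" "u \<le> v"
  shows "integral {..v} g = integral {..u} g + integral {u..v} g"
proof -
  have "{..v} = {..u} \<union> {u..v}" using assms(3) by auto
  moreover have "negligible ({..u} \<inter> {u..v})"
    using assms(3) by (intro negligible_subset[OF negligible_sing[of u]]) auto
  moreover have "g integrable_on {u..v}"
    by (intro integrable_continuous_real continuous_on_subset[OF assms(1)]) auto
  ultimately show ?thesis using assms(2) by simp
qed

lemma halfline_FTC:
  fixes g :: "real \<Rightarrow> real"
  assumes cont: "continuous_on UNIV g" and int: "\<And>u. g integrable_on {..u}"
  shows "((\<lambda>u. integral {..u} g) has_real_derivative g x) (at x)"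
proof -
  have "((\<lambda>u. integral {x - 1..u} g) has_real_derivative g x) (at x within {x - 1..x + 1})"
    by (intro integral_has_real_derivative continuous_on_subset[OF cont]) auto
  then have "((\<lambda>u. integral {x - 1..u} g) has_real_derivative g x) (at x)"
    by (simp add: at_within_Icc_at)
  then have "((\<lambda>u. integral {..x - 1} g + integral {x - 1..u} g) has_real_derivative g x) (at x)"
    by (auto intro!: derivative_eq_intros)
  then show ?thesis
  proof (rule has_field_derivative_transform_within_open[where S = "{x - 1<..}"])
    fix u :: real assume "u \<in> {x - 1<..}"
    then show "integral {..x - 1} g + integral {x - 1..u} g = integral {..u} g"
      using halfline_split[OF cont int, of "x - 1" u] by simp
  qed auto
qed

lemma halfline_lip:
  fixes g :: "real \<Rightarrow> real"
  assumes cont: "continuous_on UNIV g" and int: "\<And>u. g integrable_on {..u}"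
    and bnd: "\<And>y. \<bar>g y\<bar> \<le> M"
  shows "\<bar>integral {..u} g - integral {..v} g\<bar> \<le> M * \<bar>u - v\<bar>"
proof -
  have key: "\<bar>integral {..b} g - integral {..a} g\<bar> \<le> M * (b - a)" if "a \<le> b" for a b
  proof -
    have "integral {..b} g - integral {..a} g = integral {a..b} g"
      using halfline_split[OF cont int that] by simp
    moreover have "g integrable_on {a..b}"
      by (intro integrable_continuous_real continuous_on_subset[OF cont]) auto
    then have "norm (integral {a..b} g) \<le> integral {a..b} (\<lambda>_. M)"
      using bnd by (intro integral_norm_bound_integral) auto
    ultimately show ?thesis using that by (simp add: mult.commute)
  qed
  show ?thesis
  proof (cases "u \<le> v")
    case True then show ?thesis using key[OF True] by (simp add: abs_minus_commute)
  next
    case False then show ?thesis using key[of v u] by simp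
  qed
qed

lemma DUI_bound:
  fixes f f1 f2 :: "real \<Rightarrow> real \<Rightarrow> real" and g :: "real \<Rightarrow> real"
  assumes int: "\<And>p. \<bar>p - p0\<bar> < d \<Longrightarrow> f p integrable_on S"
    and int1: "f1 p0 integrable_on S"
    and intg: "g integrable_on S"
    and d1: "\<And>p y. \<bar>p - p0\<bar> < d \<Longrightarrow> ((\<lambda>p. f p y) has_real_derivative f1 p y) (at p)"
    and d2: "\<And>p y. \<bar>p - p0\<bar> < d \<Longrightarrow> ((\<lambda>p. f1 p y) has_real_derivative f2 p y) (at p)"
    and bnd: "\<And>p y. \<bar>p - p0\<bar> < d \<Longrightarrow> y \<in> S \<Longrightarrow> \<bar>f2 p y\<bar> \<le> g y"
    and p: "\<bar>p - p0\<bar> < d"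
  shows "\<bar>integral S (f p) - integral S (f p0) - (p - p0) * integral S (f1 p0)\<bar> \<le> integral S g * (p - p0)\<^sup>2"
proof -
  have d0: "0 < d" using p by linarith
  have pt: "\<bar>f p y - f p0 y - (p - p0) * f1 p0 y\<bar> \<le> (p - p0)\<^sup>2 * g y" if "y \<in> S" for y
    using taylor2_bound[of p0 d "\<lambda>p. f p y" "\<lambda>p. f1 p y" "\<lambda>p. f2 p y" "g y" p] d1 d2 bnd that p
    by (simp add: mult.commute)
  have i1: "(\<lambda>y. f p y - f p0 y - (p - p0) * f1 p0 y) integrable_on S"
    using int[OF p] int[of p0] d0 int1
    by (intro integrable_diff integrable_on_mult_right) auto
  have "integral S (f p) - integral S (f p0) - (p - p0) * integral S (f1 p0)
      = integral S (\<lambda>y. f p y - f p0 y - (p - p0) * f1 p0 y)"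
    using int[OF p] int[of p0] d0 int1
    by (simp add: Henstock_Kurzweil_Integration.integral_diff integrable_diff
        integrable_on_mult_right integral_mult_right)
  also have "\<bar>\<dots>\<bar> \<le> integral S (\<lambda>y. (p - p0)\<^sup>2 * g y)"
    using integral_norm_bound_integral[OF i1 integrable_on_mult_right[OF intg, of "(p - p0)\<^sup>2"]] pt
    by simp
  also have "\<dots> = integral S g * (p - p0)\<^sup>2" by (simp add: mult.commute)
  finally show ?thesis .
qed

lemma DUI:
  fixes f f1 f2 :: "real \<Rightarrow> real \<Rightarrow> real" and g :: "real \<Rightarrow> real"
  assumes "d > 0"
    and int: "\<And>p. \<bar>p - p0\<bar> < d \<Longrightarrow> f p integrable_on S"
    and int1: "f1 p0 integrable_on S"
    and intg: "g integrable_on S"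
    and d1: "\<And>p y. \<bar>p - p0\<bar> < d \<Longrightarrow> ((\<lambda>p. f p y) has_real_derivative f1 p y) (at p)"
    and d2: "\<And>p y. \<bar>p - p0\<bar> < d \<Longrightarrow> ((\<lambda>p. f1 p y) has_real_derivative f2 p y) (at p)"
    and bnd: "\<And>p y. \<bar>p - p0\<bar> < d \<Longrightarrow> y \<in> S \<Longrightarrow> \<bar>f2 p y\<bar> \<le> g y"
  shows "((\<lambda>p. integral S (f p)) has_real_derivative integral S (f1 p0)) (at p0)"
  by (rule deriv_quadratic[OF \<open>d > 0\<close>, of _ _ _ "integral S g"])
     (rule DUI_bound[OF int int1 intg d1 d2 bnd], auto)

lemma moving_bound:
  fixes f f1 f2 :: "real \<Rightarrow> real \<Rightarrow> real" and g b :: "real \<Rightarrow> real"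
  assumes "d > 0"
    and cont: "\<And>p. \<bar>p - p0\<bar> < d \<Longrightarrow> continuous_on UNIV (f p)"
    and int: "\<And>p u. \<bar>p - p0\<bar> < d \<Longrightarrow> f p integrable_on {..u}"
    and int1: "f1 p0 integrable_on {..b p0}"
    and intg: "g integrable_on {..b p0}"
    and d1: "\<And>p y. \<bar>p - p0\<bar> < d \<Longrightarrow> ((\<lambda>p. f p y) has_real_derivative f1 p y) (at p)"
    and d2: "\<And>p y. \<bar>p - p0\<bar> < d \<Longrightarrow> ((\<lambda>p. f1 p y) has_real_derivative f2 p y) (at p)"
    and bnd: "\<And>p y. \<bar>p - p0\<bar> < d \<Longrightarrow> y \<le> b p0 \<Longrightarrow> \<bar>f2 p y\<bar> \<le> g y"
    and bnd1: "\<And>p y. \<bar>p - p0\<bar> < d \<Longrightarrow> \<bar>f1 p y\<bar> \<le> M"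
    and db: "(b has_real_derivative b') (at p0)"
  shows "((\<lambda>p. integral {..b p} (f p)) has_real_derivative
            integral {..b p0} (f1 p0) + f p0 (b p0) * b') (at p0)"
proof -
  define R where "R p = (integral {..b p} (f p) - integral {..b p} (f p0))
                       - (integral {..b p0} (f p) - integral {..b p0} (f p0))" for p
  have eq: "integral {..b p} (f p) = integral {..b p0} (f p) + (integral {..b p} (f p0) - integral {..b p0} (f p0)) + R p" for p
    unfolding R_def by simp
  have D1: "((\<lambda>p. integral {..b p0} (f p)) has_real_derivative integral {..b p0} (f1 p0)) (at p0)"
    by (rule DUI[OF \<open>d > 0\<close> int int1 intg d1 d2]) (auto intro: bnd)
  have p00: "\<bar>p0 - p0\<bar> < d" using \<open>d > 0\<close> by simp
  have D2: "((\<lambda>p. integral {..b p} (f p0) - integral {..b p0} (f p0)) has_real_derivative f p0 (b p0) * b' - 0) (at p0)"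
    by (intro DERIV_diff DERIV_chain2[OF halfline_FTC[OF cont[OF p00] int[OF p00]] db] DERIV_const)
  have D3: "(R has_real_derivative 0) (at p0)"
  proof (rule deriv_small[of b p0 R d M])
    show "(b \<longlongrightarrow> b p0) (at p0)" using DERIV_isCont[OF db] by (simp add: isCont_def)
    show "R p0 = 0" unfolding R_def by simp
    show "0 < d" by fact
    fix p assume p: "\<bar>p - p0\<bar> < d"
    let ?g = "\<lambda>y. f p y - f p0 y"
    have lipf: "\<bar>f p y - f p0 y\<bar> \<le> M * \<bar>p - p0\<bar>" for y
    proof (rule lip_from_deriv[of p0 p "\<lambda>p. f p y" "\<lambda>p. f1 p y" M])
      fix x assume "min p0 p \<le> x" "x \<le> max p0 p"
      then have "\<bar>x - p0\<bar> < d" using p by (auto simp: min_def max_def split: if_splits)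
      then show "((\<lambda>p. f p y) has_real_derivative f1 x y) (at x)" "\<bar>f1 x y\<bar> \<le> M"
        using d1 bnd1 by auto
    qed
    have cg: "continuous_on UNIV ?g" using cont[OF p] cont[OF p00] by (intro continuous_intros)
    have ig: "?g integrable_on {..u}" for u using int[OF p] int[OF p00] by (intro integrable_diff)
    have "R p = integral {..b p} ?g - integral {..b p0} ?g"
      unfolding R_def using int[OF p] int[OF p00]
      by (simp add: Henstock_Kurzweil_Integration.integral_diff)
    also have "\<bar>\<dots>\<bar> \<le> (M * \<bar>p - p0\<bar>) * \<bar>b p - b p0\<bar>"
      by (rule halfline_lip[OF cg ig lipf])
    finally show "\<bar>R p\<bar> \<le> M * \<bar>p - p0\<bar> * \<bar>b p - b p0\<bar>" .
  qed
  have "((\<lambda>p. integral {..b p0} (f p) + (integral {..b p} (f p0) - integral {..b p0} (f p0)) + R p)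
         has_real_derivative integral {..b p0} (f1 p0) + (f p0 (b p0) * b' - 0) + 0) (at p0)"
    by (intro DERIV_add D1 D2 D3)
  then show ?thesis unfolding eq[symmetric] by simp
qed

lemma tail_bot:
  fixes f :: "real \<Rightarrow> real"
  assumes "f absolutely_integrable_on {..b}"
  shows "((\<lambda>a. integral {a..b} f) \<longlongrightarrow> integral {..b} f) at_bot"
proof -
  have "((\<lambda>a. set_lebesgue_integral lebesgue {a..b} f) \<longlongrightarrow> set_lebesgue_integral lebesgue {..b} f) at_bot"
    by (rule tendsto_set_lebesgue_integral_at_bot[OF _ assms]) auto
  moreover have "set_lebesgue_integral lebesgue {..b} f = integral {..b} f"
    using set_lebesgue_integral_eq_integral(2)[OF assms] .
  moreover have "set_lebesgue_integral lebesgue {a..b} f = integral {a..b} f" for a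
    by (rule set_lebesgue_integral_eq_integral(2)[OF set_integrable_subset[OF assms]]) auto
  ultimately show ?thesis by simp
qed

lemma tail_top:
  fixes f :: "real \<Rightarrow> real"
  assumes "f absolutely_integrable_on {a..}"
  shows "((\<lambda>b. integral {a..b} f) \<longlongrightarrow> integral {a..} f) at_top"
proof -
  have "((\<lambda>b. set_lebesgue_integral lebesgue {a..b} f) \<longlongrightarrow> set_lebesgue_integral lebesgue {a..} f) at_top"
    by (rule tendsto_set_lebesgue_integral_at_top[OF _ assms]) auto
  moreover have "set_lebesgue_integral lebesgue {a..} f = integral {a..} f"
    using set_lebesgue_integral_eq_integral(2)[OF assms] .
  moreover have "set_lebesgue_integral lebesgue {a..b} f = integral {a..b} f" for b
    by (rule set_lebesgue_integral_eq_integral(2)[OF set_integrable_subset[OF assms]]) auto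
  ultimately show ?thesis by simp
qed

lemma improper_FTC:
  fixes \<psi> \<psi>' :: "real \<Rightarrow> real"
  assumes der: "\<And>y. (\<psi> has_real_derivative \<psi>' y) (at y)"
    and ai: "\<psi>' absolutely_integrable_on {..b}"
    and lim: "(\<psi> \<longlongrightarrow> 0) at_bot"
  shows "integral {..b} \<psi>' = \<psi> b"
proof -
  have ev: "eventually (\<lambda>a. integral {a..b} \<psi>' = \<psi> b - \<psi> a) at_bot"
  proof (rule eventually_mono[OF eventually_le_at_bot[of b]])
    fix a assume "a \<le> b"
    then have "(\<psi>' has_integral (\<psi> b - \<psi> a)) {a..b}"
      using der by (intro fundamental_theorem_of_calculus)
        (auto simp: has_real_derivative_iff_has_vector_derivative[symmetric] intro: DERIV_subset)
    then show "integral {a..b} \<psi>' = \<psi> b - \<psi> a" by (rule integral_unique)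
  qed
  have "((\<lambda>a. \<psi> b - \<psi> a) \<longlongrightarrow> \<psi> b - 0) at_bot"
    by (intro tendsto_intros lim)
  then have "((\<lambda>a. integral {a..b} \<psi>') \<longlongrightarrow> \<psi> b) at_bot"
    using ev by (simp add: tendsto_cong)
  from tendsto_unique[OF _ tail_bot[OF ai] this] show ?thesis by simp
qed

lemma phi_abs_integrable: "S \<in> sets borel \<Longrightarrow> phi absolutely_integrable_on S"
  by (rule absolutely_integrable_integrable_bound[of _ _ phi])
     (auto simp: phi_integrable_on less_imp_le[OF phi_pos])

lemma phi_has_integral_Ncdf: "(phi has_integral Ncdf u) {..u}"
  unfolding Ncdf_phi using phi_integrable_on[of "{..u}"] by (simp add: integrable_integral)

lemma Ncdf_nonneg: "Ncdf u \<ge> 0"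
  unfolding Ncdf_phi by (rule integral_nonneg) (auto simp: phi_integrable_on less_imp_le[OF phi_pos])

lemma Ncdf_le1: "Ncdf u \<le> 1"
proof -
  have "integral {..u} phi \<le> integral UNIV phi"
    by (rule integral_subset_le) (auto simp: phi_integrable_on less_imp_le[OF phi_pos])
  then show ?thesis using phi_has_integral_UNIV unfolding Ncdf_phi by (simp add: integral_unique)
qed

lemma DERIV_Ncdf: "(Ncdf has_real_derivative phi x) (at x)"
proof -
  have "((\<lambda>u. integral {..u} phi) has_real_derivative phi x) (at x)"
    by (rule halfline_FTC[OF continuous_phi]) (simp add: phi_integrable_on)
  then show ?thesis by (simp add: Ncdf_phi[abs_def])
qed

lemma continuous_Ncdf: "continuous_on UNIV Ncdf"
  using DERIV_Ncdf DERIV_isCont continuous_at_imp_continuous_on by blast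

lemma Ncdf_lip: "\<bar>Ncdf a - Ncdf b\<bar> \<le> \<bar>a - b\<bar>"
proof -
  have "\<bar>phi x\<bar> \<le> 1" for x using phi_le[of x] phi_pos[of x] by simp
  then show ?thesis using lip_from_deriv[of b a Ncdf phi 1] DERIV_Ncdf by simp
qed

lemma Ncdf_at_top: "(Ncdf \<longlongrightarrow> 1) at_top"
proof -
  have "((\<lambda>b. integral {0..b} phi) \<longlongrightarrow> integral {0..} phi) at_top"
    by (rule tail_top) (simp add: phi_abs_integrable)
  then have "((\<lambda>b. Ncdf 0 + integral {0..b} phi) \<longlongrightarrow> Ncdf 0 + integral {0..} phi) at_top"
    by (intro tendsto_intros)
  moreover have "Ncdf 0 + integral {0..} phi = 1"
  proof -
    have "UNIV = {..0::real} \<union> {0..}" by auto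
    moreover have "negligible ({..0::real} \<inter> {0..})"
      by (intro negligible_subset[OF negligible_sing[of 0]]) auto
    ultimately have "integral UNIV phi = integral {..0} phi + integral {0..} phi"
      by (metis integral_Un phi_integrable_on sets_borel atLeast_borel atMost_borel)
    then show ?thesis using phi_has_integral_UNIV unfolding Ncdf_phi by (simp add: integral_unique)
  qed
  moreover have "eventually (\<lambda>b. Ncdf 0 + integral {0..b} phi = Ncdf b) at_top"
    by (intro eventually_mono[OF eventually_ge_at_top[of 0]])
       (simp add: Ncdf_phi halfline_split[OF continuous_phi phi_integrable_on])
  ultimately show ?thesis by (simp add: tendsto_cong)
qed

lemma Ncdf_at_bot: "(Ncdf \<longlongrightarrow> 0) at_bot"
proof -
  have "((\<lambda>a. integral {a..0} phi) \<longlongrightarrow> integral {..0} phi) at_bot"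
    by (rule tail_bot) (simp add: phi_abs_integrable)
  then have "((\<lambda>a. Ncdf 0 - integral {a..0} phi) \<longlongrightarrow> Ncdf 0 - integral {..0} phi) at_bot"
    by (intro tendsto_intros)
  moreover have "eventually (\<lambda>a. Ncdf 0 - integral {a..0} phi = Ncdf a) at_bot"
    by (intro eventually_mono[OF eventually_le_at_bot[of 0]])
       (simp add: Ncdf_phi halfline_split[OF continuous_phi phi_integrable_on])
  ultimately have "((\<lambda>a. integral {..a} phi) \<longlongrightarrow> 0) at_bot" by (simp add: tendsto_cong Ncdf_phi)
  then show ?thesis by (simp add: Ncdf_phi[abs_def])
qed

lemma inner_affine:
  assumes "s > 0"
  shows "((\<lambda>y1. indicator {..a} y1 * (phi ((y1 - t) / s) / s)) has_integral Ncdf ((a - t) / s)) UNIV"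
proof -
  define u where "u = (a - t) / s"
  let ?h = "\<lambda>y1. indicator {..a} y1 * (phi ((y1 - t) / s) / s) :: real"
  let ?k = "\<lambda>x. indicator {..u} x * phi x :: real"
  have hk: "?h (t + s * x) = ?k x / s" for x
  proof -
    have "(t + s * x \<le> a) = (x \<le> u)" using assms unfolding u_def by (simp add: field_simps)
    then show ?thesis using assms by (simp add: indicator_def)
  qed
  have ik: "integrable lborel ?k"
    using phi_moment_set_integrable[of "{..u}" 0] unfolding set_integrable_def by simp
  have "integrable lborel (\<lambda>x. ?h (t + s * x))"
    unfolding hk using ik by simp
  then have ih: "integrable lborel ?h"
    using lborel_integrable_real_affine_iff[of s ?h t] assms by simp
  have "(\<integral>x. ?h x \<partial>lborel) = \<bar>s\<bar> *\<^sub>R (\<integral>x. ?h (t + s * x) \<partial>lborel)"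
    using assms by (intro lborel_integral_real_affine) simp
  also have "\<dots> = (\<integral>x. ?k x \<partial>lborel)"
    unfolding hk using assms by simp
  also have "\<dots> = Ncdf u"
  proof -
    have "(\<integral>x. ?k x \<partial>lborel) = set_lebesgue_integral lborel {..u} phi"
      by (simp add: set_lebesgue_integral_def)
    also have "\<dots> = integral {..u} phi"
      using phi_moment_set_integrable[of "{..u}" 0]
      by (intro set_borel_integral_eq_integral(2)) simp
    finally show ?thesis by (simp add: Ncdf_phi)
  qed
  finally show ?thesis using has_integral_integral_lborel[OF ih] unfolding u_def by simp
qed

lemma DERIV_Ncdf_chain[derivative_intros]:
  "(g has_real_derivative g') (at x within S) \<Longrightarrow>
   ((\<lambda>x. Ncdf (g x)) has_real_derivative phi (g x) * g') (at x within S)"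
  using DERIV_chain2[OF DERIV_Ncdf] by blast

lemma DERIV_phi_chain[derivative_intros]:
  "(g has_real_derivative g') (at x within S) \<Longrightarrow>
   ((\<lambda>x. phi (g x)) has_real_derivative (- g x * phi (g x)) * g') (at x within S)"
  using DERIV_chain2[OF DERIV_phi] by blast

lemma continuous_on_Ncdf_comp[continuous_intros]:
  "continuous_on S g \<Longrightarrow> continuous_on S (\<lambda>x. Ncdf (g x))"
  using continuous_on_compose2[OF continuous_Ncdf] by auto

lemma continuous_on_phi_comp[continuous_intros]:
  "continuous_on S g \<Longrightarrow> continuous_on S (\<lambda>x. phi (g x))"
  using continuous_on_compose2[OF continuous_phi] by auto

lemma phi_nonneg: "0 \<le> phi t" using phi_pos[of t] by simp
lemma phi_le1: "phi t \<le> 1" using phi_le[of t] by simp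
lemma Ncdf_abs_le1: "\<bar>Ncdf t\<bar> \<le> 1" using Ncdf_nonneg[of t] Ncdf_le1[of t] by simp
lemma t_phi_abs: "\<bar>t\<bar> * phi t \<le> 1" using t_phi_bound[of t] phi_nonneg[of t] by (simp add: abs_mult)

lemma pm_int: "(\<lambda>y. phi y * \<bar>y\<bar> ^ k) integrable_on {..b}"
  by (rule phi_moment_integrable_on) simp

lemma pm_int0: "phi integrable_on {..b}"
  by (rule phi_integrable_on) simp

lemma dom_int_half:
  fixes f :: "real \<Rightarrow> real"
  assumes "continuous_on UNIV f" "\<And>y. \<bar>f y\<bar> \<le> C0 * phi y + C1 * (phi y * \<bar>y\<bar>) + C2 * (phi y * \<bar>y\<bar>\<^sup>2)"
  shows "f integrable_on {..b}"
proof (rule dom_integrable[OF assms(1) _ _ assms(2)])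
  show "(\<lambda>y. C0 * phi y + C1 * (phi y * \<bar>y\<bar>) + C2 * (phi y * \<bar>y\<bar>\<^sup>2)) integrable_on {..b}"
    using pm_int[of 1 b] pm_int[of 2 b] pm_int0[of b]
    by (intro integrable_add integrable_on_mult_right) auto
qed auto

lemma dom_absint_half:
  fixes f :: "real \<Rightarrow> real"
  assumes "continuous_on UNIV f" "\<And>y. \<bar>f y\<bar> \<le> C0 * phi y + C1 * (phi y * \<bar>y\<bar>) + C2 * (phi y * \<bar>y\<bar>\<^sup>2)"
  shows "f absolutely_integrable_on {..b}"
proof (rule absolutely_integrable_integrable_bound[OF _ dom_int_half[OF assms]])
  show "(\<lambda>y. C0 * phi y + C1 * (phi y * \<bar>y\<bar>) + C2 * (phi y * \<bar>y\<bar>\<^sup>2)) integrable_on {..b}"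
    using pm_int[of 1 b] pm_int[of 2 b] pm_int0[of b]
    by (intro integrable_add integrable_on_mult_right) auto
qed (use assms(2) in auto)

definition Hf :: "real \<Rightarrow> real \<Rightarrow> real \<Rightarrow> real" where
  "Hf b a k = integral {..b} (\<lambda>y. phi y * Ncdf (a - k * y))"
definition I0 :: "real \<Rightarrow> real \<Rightarrow> real \<Rightarrow> real" where
  "I0 b a k = integral {..b} (\<lambda>y. phi y * phi (a - k * y))"
definition I1 :: "real \<Rightarrow> real \<Rightarrow> real \<Rightarrow> real" where
  "I1 b a k = integral {..b} (\<lambda>y. - y * phi y * phi (a - k * y))"
definition I2 :: "real \<Rightarrow> real \<Rightarrow> real \<Rightarrow> real" where
  "I2 b a k = integral {..b} (\<lambda>y. phi y * (- (a - k * y) * phi (a - k * y)))"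

lemma int_H: "(\<lambda>y. phi y * Ncdf (a - k * y)) integrable_on {..b}"
proof (rule dom_int_half[of _ 1 0 0])
  show "continuous_on UNIV (\<lambda>y. phi y * Ncdf (a - k * y))"
    by (intro continuous_intros)
  fix y
  have "\<bar>phi y * Ncdf (a - k * y)\<bar> = phi y * \<bar>Ncdf (a - k * y)\<bar>" by (simp add: abs_mult phi_nonneg)
  also have "\<dots> \<le> phi y * 1" by (intro mult_left_mono Ncdf_abs_le1 phi_nonneg)
  finally show "\<bar>phi y * Ncdf (a - k * y)\<bar> \<le> 1 * phi y + 0 * (phi y * \<bar>y\<bar>) + 0 * (phi y * \<bar>y\<bar>\<^sup>2)" by simp
qed

lemma int_I0: "(\<lambda>y. phi y * phi (a - k * y)) integrable_on {..b}"
proof (rule dom_int_half[of _ 1 0 0])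
  show "continuous_on UNIV (\<lambda>y. phi y * phi (a - k * y))"
    by (intro continuous_intros)
  fix y
  have "\<bar>phi y * phi (a - k * y)\<bar> = phi y * phi (a - k * y)" by (simp add: abs_mult phi_nonneg)
  also have "\<dots> \<le> phi y * 1" by (intro mult_left_mono phi_le1 phi_nonneg)
  finally show "\<bar>phi y * phi (a - k * y)\<bar> \<le> 1 * phi y + 0 * (phi y * \<bar>y\<bar>) + 0 * (phi y * \<bar>y\<bar>\<^sup>2)" by simp
qed

lemma int_I1: "(\<lambda>y. - y * phi y * phi (a - k * y)) integrable_on {..b}"
proof (rule dom_int_half[of _ 0 1 0])
  fix y
  have "\<bar>- y * phi y * phi (a - k * y)\<bar> = (phi y * \<bar>y\<bar>) * phi (a - k * y)"
    by (simp add: abs_mult phi_nonneg)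
  also have "\<dots> \<le> (phi y * \<bar>y\<bar>) * 1"
    by (intro mult_left_mono phi_le1) (simp add: phi_nonneg)
  finally show "\<bar>- y * phi y * phi (a - k * y)\<bar> \<le> 0 * phi y + 1 * (phi y * \<bar>y\<bar>) + 0 * (phi y * \<bar>y\<bar>\<^sup>2)" by simp
qed (intro continuous_intros)

lemma int_I2: "(\<lambda>y. phi y * (- (a - k * y) * phi (a - k * y))) integrable_on {..b}"
proof (rule dom_int_half[of _ 1 0 0])
  fix y
  have "\<bar>phi y * (- (a - k * y) * phi (a - k * y))\<bar> = phi y * \<bar>(a - k * y) * phi (a - k * y)\<bar>"
    by (simp only: abs_mult abs_minus_cancel) (simp add: phi_nonneg)
  also have "\<dots> \<le> phi y * 1"
    by (intro mult_left_mono t_phi_bound) (simp add: phi_nonneg)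
  finally show "\<bar>phi y * (- (a - k * y) * phi (a - k * y))\<bar> \<le> 1 * phi y + 0 * (phi y * \<bar>y\<bar>) + 0 * (phi y * \<bar>y\<bar>\<^sup>2)" by simp
qed (intro continuous_intros)

lemma phi_at_bot: "(phi \<longlongrightarrow> 0) at_bot"
proof (rule tendsto_sandwich[of "\<lambda>_. 0" _ _ "\<lambda>y. inverse (- y)"])
  show "eventually (\<lambda>y. 0 \<le> phi y) at_bot" by (simp add: phi_nonneg)
  show "eventually (\<lambda>y. phi y \<le> inverse (- y)) at_bot"
  proof (rule eventually_mono[OF eventually_le_at_bot[of "-1"]])
    fix y :: real assume y: "y \<le> -1"
    have "\<bar>y\<bar> * phi y \<le> 1" by (rule t_phi_abs)
    then have "(- y) * phi y \<le> 1" using y by simp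
    then show "phi y \<le> inverse (- y)" using y by (simp add: field_simps)
  qed
  show "((\<lambda>y::real. inverse (- y)) \<longlongrightarrow> 0) at_bot"
  proof -
    have e: "(\<lambda>y::real. inverse (- y)) = (\<lambda>x. inverse ((\<lambda>x. - x) x))" by simp
    show ?thesis by (rule tendsto_inverse_0_at_top[where f = "\<lambda>x. - x", OF filterlim_uminus_at_top_at_bot])
  qed
qed simp

lemma I_identity: "I1 b a k - k * I2 b a k = phi b * phi (a - k * b)"
proof -
  let ?\<psi> = "\<lambda>y. phi y * phi (a - k * y)"
  let ?\<psi>' = "\<lambda>y. - y * phi y * phi (a - k * y) - k * (phi y * (- (a - k * y) * phi (a - k * y)))"
  have der: "(?\<psi> has_real_derivative ?\<psi>' y) (at y)" for y
    by (auto intro!: derivative_eq_intros simp: algebra_simps)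
  have ai: "?\<psi>' absolutely_integrable_on {..b}"
  proof (rule dom_absint_half[of _ "\<bar>k\<bar>" 1 0])
    fix y
    have "\<bar>?\<psi>' y\<bar> \<le> \<bar>- y * phi y * phi (a - k * y)\<bar> + \<bar>k\<bar> * \<bar>phi y * (- (a - k * y) * phi (a - k * y))\<bar>"
      using abs_triangle_ineq4[of "- y * phi y * phi (a - k * y)" "k * (phi y * (- (a - k * y) * phi (a - k * y)))"]
      by (simp only: abs_mult[of k])
    also have "\<dots> \<le> (phi y * \<bar>y\<bar>) + \<bar>k\<bar> * phi y"
    proof (intro add_mono mult_left_mono)
      have "\<bar>- y * phi y * phi (a - k * y)\<bar> = (phi y * \<bar>y\<bar>) * phi (a - k * y)"
        by (simp add: abs_mult phi_nonneg)
      also have "\<dots> \<le> (phi y * \<bar>y\<bar>) * 1"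
        by (intro mult_left_mono phi_le1) (simp add: phi_nonneg)
      finally show "\<bar>- y * phi y * phi (a - k * y)\<bar> \<le> phi y * \<bar>y\<bar>" by simp
      have "\<bar>phi y * (- (a - k * y) * phi (a - k * y))\<bar> = phi y * \<bar>(a - k * y) * phi (a - k * y)\<bar>"
        by (simp only: abs_mult abs_minus_cancel) (simp add: phi_nonneg)
      also have "\<dots> \<le> phi y * 1"
        by (intro mult_left_mono t_phi_bound) (simp add: phi_nonneg)
      finally show "\<bar>phi y * (- (a - k * y) * phi (a - k * y))\<bar> \<le> phi y" by simp
    qed simp
    finally show "\<bar>?\<psi>' y\<bar> \<le> \<bar>k\<bar> * phi y + 1 * (phi y * \<bar>y\<bar>) + 0 * (phi y * \<bar>y\<bar>\<^sup>2)" by simp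
  qed (intro continuous_intros)
  have lim: "(?\<psi> \<longlongrightarrow> 0) at_bot"
  proof (rule tendsto_sandwich[of "\<lambda>_. 0" _ _ phi])
    show "eventually (\<lambda>y. 0 \<le> ?\<psi> y) at_bot" by (simp add: phi_nonneg)
    show "eventually (\<lambda>y. ?\<psi> y \<le> phi y) at_bot"
      by (intro always_eventually allI) (simp add: mult_left_le phi_le1 phi_nonneg)
  qed (auto intro: phi_at_bot)
  have "integral {..b} ?\<psi>' = ?\<psi> b" by (rule improper_FTC[OF der ai lim])
  moreover have "integral {..b} ?\<psi>' = I1 b a k - k * I2 b a k"
    unfolding I1_def I2_def
    using int_I1[of a k b] int_I2[of a k b]
    by (simp add: Henstock_Kurzweil_Integration.integral_diff integrable_on_mult_right integral_mult_right)
  ultimately show ?thesis by simp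
qed

lemma g3_int: "(\<lambda>y. C0 * phi y + C1 * (phi y * \<bar>y\<bar>) + C2 * (phi y * \<bar>y\<bar>\<^sup>2)) integrable_on {..b}"
  using pm_int[of 1 b] pm_int[of 2 b] pm_int0[of b]
  by (intro integrable_add integrable_on_mult_right) auto

lemma abs_lin: 
  fixes a k y B :: real
  assumes "\<bar>a\<bar> \<le> B" "\<bar>k\<bar> \<le> B"
  shows "\<bar>a - k * y\<bar> \<le> B + B * \<bar>y\<bar>"
proof -
  have "\<bar>a - k * y\<bar> \<le> \<bar>a\<bar> + \<bar>k\<bar> * \<bar>y\<bar>" using abs_triangle_ineq4[of a "k * y"] by (simp add: abs_mult)
  also have "\<dots> \<le> B + B * \<bar>y\<bar>" using assms by (intro add_mono mult_right_mono) auto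
  finally show ?thesis .
qed

lemma path_H:
  fixes A Kp A1 K1 A2 K2 b :: "real \<Rightarrow> real"
  assumes "d > 0"
    and dA: "\<And>p. \<bar>p - p0\<bar> < d \<Longrightarrow> (A has_real_derivative A1 p) (at p)"
    and dA1: "\<And>p. \<bar>p - p0\<bar> < d \<Longrightarrow> (A1 has_real_derivative A2 p) (at p)"
    and dK: "\<And>p. \<bar>p - p0\<bar> < d \<Longrightarrow> (Kp has_real_derivative K1 p) (at p)"
    and dK1: "\<And>p. \<bar>p - p0\<bar> < d \<Longrightarrow> (K1 has_real_derivative K2 p) (at p)"
    and bA1: "\<And>p. \<bar>p - p0\<bar> < d \<Longrightarrow> \<bar>A1 p\<bar> \<le> B"
    and bA2: "\<And>p. \<bar>p - p0\<bar> < d \<Longrightarrow> \<bar>A2 p\<bar> \<le> B"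
    and bK1: "\<And>p. \<bar>p - p0\<bar> < d \<Longrightarrow> \<bar>K1 p\<bar> \<le> B"
    and bK2: "\<And>p. \<bar>p - p0\<bar> < d \<Longrightarrow> \<bar>K2 p\<bar> \<le> B"
    and db: "(b has_real_derivative b') (at p0)"
  shows "((\<lambda>p. Hf (b p) (A p) (Kp p)) has_real_derivative
           A1 p0 * I0 (b p0) (A p0) (Kp p0) + K1 p0 * I1 (b p0) (A p0) (Kp p0)
           + phi (b p0) * Ncdf (A p0 - Kp p0 * b p0) * b') (at p0)"
proof -
  have p00: "\<bar>p0 - p0\<bar> < d" using \<open>d > 0\<close> by simp
  have B0: "0 \<le> B" using bA1[OF p00] by linarith
  define f where "f p y = phi y * Ncdf (A p - Kp p * y)" for p y
  define f1 where "f1 p y = phi y * phi (A p - Kp p * y) * (A1 p - K1 p * y)" for p y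
  define f2 where "f2 p y = phi y * ((- (A p - Kp p * y) * phi (A p - Kp p * y)) * (A1 p - K1 p * y) * (A1 p - K1 p * y)
                     + phi (A p - Kp p * y) * (A2 p - K2 p * y))" for p y
  define g where "g y = (2 * B\<^sup>2 + B) * phi y + B * (phi y * \<bar>y\<bar>) + (2 * B\<^sup>2) * (phi y * \<bar>y\<bar>\<^sup>2)" for y
  have f1bnd: "\<bar>f1 p y\<bar> \<le> 2 * B" if p: "\<bar>p - p0\<bar> < d" for p y
  proof -
    have l: "\<bar>A1 p - K1 p * y\<bar> \<le> B + B * \<bar>y\<bar>" by (rule abs_lin[OF bA1[OF p] bK1[OF p]])
    have "\<bar>f1 p y\<bar> = phi (A p - Kp p * y) * (phi y * \<bar>A1 p - K1 p * y\<bar>)"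
      unfolding f1_def by (simp add: abs_mult phi_nonneg)
    also have "\<dots> \<le> 1 * (phi y * \<bar>A1 p - K1 p * y\<bar>)"
      by (intro mult_right_mono phi_le1) (simp add: phi_nonneg)
    also have "\<dots> \<le> phi y * (B + B * \<bar>y\<bar>)" using l by (simp add: mult_left_mono phi_nonneg)
    also have "\<dots> = B * phi y + B * (\<bar>y\<bar> * phi y)" by (simp add: algebra_simps)
    also have "\<dots> \<le> B * 1 + B * 1"
      using B0 phi_le1[of y] t_phi_abs[of y] by (intro add_mono mult_left_mono) auto
    finally show ?thesis by simp
  qed
  have f2bnd: "\<bar>f2 p y\<bar> \<le> g y" if p: "\<bar>p - p0\<bar> < d" for p y
  proof -
    let ?u = "A p - Kp p * y"
    have l1: "\<bar>A1 p - K1 p * y\<bar> \<le> B + B * \<bar>y\<bar>" by (rule abs_lin[OF bA1[OF p] bK1[OF p]])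
    have l2: "\<bar>A2 p - K2 p * y\<bar> \<le> B + B * \<bar>y\<bar>" by (rule abs_lin[OF bA2[OF p] bK2[OF p]])
    have sq: "(A1 p - K1 p * y) * (A1 p - K1 p * y) \<le> 2 * B\<^sup>2 + 2 * B\<^sup>2 * \<bar>y\<bar>\<^sup>2"
    proof -
      have "(A1 p - K1 p * y) * (A1 p - K1 p * y) = \<bar>A1 p - K1 p * y\<bar> * \<bar>A1 p - K1 p * y\<bar>" by simp
      also have "\<dots> \<le> (B + B * \<bar>y\<bar>) * (B + B * \<bar>y\<bar>)" using l1 by (intro mult_mono) auto
      also have "\<dots> \<le> 2 * B\<^sup>2 + 2 * B\<^sup>2 * \<bar>y\<bar>\<^sup>2"
        using sum_squares_ge_zero[of "B - B * \<bar>y\<bar>" 0] by (simp add: power2_eq_square algebra_simps)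
      finally show ?thesis .
    qed
    have "\<bar>(- ?u * phi ?u) * (A1 p - K1 p * y) * (A1 p - K1 p * y) + phi ?u * (A2 p - K2 p * y)\<bar>
          \<le> \<bar>?u * phi ?u\<bar> * ((A1 p - K1 p * y) * (A1 p - K1 p * y)) + phi ?u * \<bar>A2 p - K2 p * y\<bar>"
    proof -
      have "\<bar>(- ?u * phi ?u) * (A1 p - K1 p * y) * (A1 p - K1 p * y)\<bar> = \<bar>?u * phi ?u\<bar> * ((A1 p - K1 p * y) * (A1 p - K1 p * y))"
        by (simp only: abs_mult abs_minus_cancel mult.assoc abs_mult_self_eq mult_minus_left) 
      moreover have "\<bar>phi ?u * (A2 p - K2 p * y)\<bar> = phi ?u * \<bar>A2 p - K2 p * y\<bar>"
        by (simp add: abs_mult phi_nonneg)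
      ultimately show ?thesis by (metis abs_triangle_ineq)
    qed
    also have "\<dots> \<le> 1 * (2 * B\<^sup>2 + 2 * B\<^sup>2 * \<bar>y\<bar>\<^sup>2) + 1 * (B + B * \<bar>y\<bar>)"
      using sq l2 t_phi_bound[of ?u] phi_le1[of ?u] phi_nonneg[of ?u]
      by (intro add_mono mult_mono) auto
    finally have "\<bar>(- ?u * phi ?u) * (A1 p - K1 p * y) * (A1 p - K1 p * y) + phi ?u * (A2 p - K2 p * y)\<bar>
          \<le> 2 * B\<^sup>2 + 2 * B\<^sup>2 * \<bar>y\<bar>\<^sup>2 + B + B * \<bar>y\<bar>" by simp
    then have "\<bar>f2 p y\<bar> \<le> phi y * (2 * B\<^sup>2 + 2 * B\<^sup>2 * \<bar>y\<bar>\<^sup>2 + B + B * \<bar>y\<bar>)"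
      unfolding f2_def by (simp add: abs_mult phi_nonneg mult_left_mono)
    also have "\<dots> = g y" unfolding g_def by (simp add: algebra_simps)
    finally show ?thesis .
  qed
  have main: "((\<lambda>p. integral {..b p} (f p)) has_real_derivative
            integral {..b p0} (f1 p0) + f p0 (b p0) * b') (at p0)"
  proof (rule moving_bound[OF \<open>d > 0\<close>, where ?f2.0 = f2 and g = g and M = "2 * B"])
    fix p assume p: "\<bar>p - p0\<bar> < d"
    show "continuous_on UNIV (f p)" unfolding f_def by (intro continuous_intros)
    show "f p integrable_on {..u}" for u unfolding f_def by (rule int_H)
    fix y
    show "((\<lambda>p. f p y) has_real_derivative f1 p y) (at p)"
      unfolding f_def f1_def using dA[OF p] dK[OF p]
      by - ((rule derivative_eq_intros refl | assumption)+, simp add: algebra_simps)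
    show "((\<lambda>p. f1 p y) has_real_derivative f2 p y) (at p)"
      unfolding f1_def f2_def using dA[OF p] dK[OF p] dA1[OF p] dK1[OF p]
      by - ((rule derivative_eq_intros refl | assumption)+, simp add: algebra_simps)
    show "\<bar>f2 p y\<bar> \<le> g y" by (rule f2bnd[OF p])
    show "\<bar>f1 p y\<bar> \<le> 2 * B" by (rule f1bnd[OF p])
  next
    show "f1 p0 integrable_on {..b p0}"
    proof (rule dom_int_half[of _ "\<bar>A1 p0\<bar>" "\<bar>K1 p0\<bar>" 0])
      show "continuous_on UNIV (f1 p0)" unfolding f1_def by (intro continuous_intros)
      fix y
      have "\<bar>f1 p0 y\<bar> = phi (A p0 - Kp p0 * y) * (phi y * \<bar>A1 p0 - K1 p0 * y\<bar>)"
        unfolding f1_def by (simp add: abs_mult phi_nonneg)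
      also have "\<dots> \<le> 1 * (phi y * \<bar>A1 p0 - K1 p0 * y\<bar>)"
        by (intro mult_right_mono phi_le1) (simp add: phi_nonneg)
      also have "\<dots> \<le> phi y * (\<bar>A1 p0\<bar> + \<bar>K1 p0\<bar> * \<bar>y\<bar>)"
        using abs_triangle_ineq4[of "A1 p0" "K1 p0 * y"]
        by (simp add: mult_left_mono phi_nonneg abs_mult)
      finally show "\<bar>f1 p0 y\<bar> \<le> \<bar>A1 p0\<bar> * phi y + \<bar>K1 p0\<bar> * (phi y * \<bar>y\<bar>) + 0 * (phi y * \<bar>y\<bar>\<^sup>2)"
        by (simp add: algebra_simps)
    qed
    show "g integrable_on {..b p0}" unfolding g_def by (rule g3_int)
  qed (rule db)
  have eqI: "integral {..b p0} (f1 p0) = A1 p0 * I0 (b p0) (A p0) (Kp p0) + K1 p0 * I1 (b p0) (A p0) (Kp p0)"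
  proof -
    have "f1 p0 = (\<lambda>y. A1 p0 * (phi y * phi (A p0 - Kp p0 * y)) + K1 p0 * (- y * phi y * phi (A p0 - Kp p0 * y)))"
      unfolding f1_def by (rule ext) (simp add: algebra_simps)
    moreover have "integral {..b p0} (\<lambda>y. A1 p0 * (phi y * phi (A p0 - Kp p0 * y)) + K1 p0 * (- y * phi y * phi (A p0 - Kp p0 * y)))
       = A1 p0 * integral {..b p0} (\<lambda>y. phi y * phi (A p0 - Kp p0 * y)) + K1 p0 * integral {..b p0} (\<lambda>y. - y * phi y * phi (A p0 - Kp p0 * y))"
      by (simp only: integral_add[OF integrable_on_mult_right[OF int_I0] integrable_on_mult_right[OF int_I1]] integral_mult_right)
    ultimately show ?thesis unfolding I0_def I1_def by simp
  qed
  show ?thesis using main unfolding eqI f_def Hf_def by simp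
qed

lemma path_I0:
  fixes A A1 A2 b :: "real \<Rightarrow> real"
  assumes "d > 0"
    and dA: "\<And>p. \<bar>p - p0\<bar> < d \<Longrightarrow> (A has_real_derivative A1 p) (at p)"
    and dA1: "\<And>p. \<bar>p - p0\<bar> < d \<Longrightarrow> (A1 has_real_derivative A2 p) (at p)"
    and bA1: "\<And>p. \<bar>p - p0\<bar> < d \<Longrightarrow> \<bar>A1 p\<bar> \<le> B"
    and bA2: "\<And>p. \<bar>p - p0\<bar> < d \<Longrightarrow> \<bar>A2 p\<bar> \<le> B"
    and db: "(b has_real_derivative b') (at p0)"
  shows "((\<lambda>p. I0 (b p) (A p) k) has_real_derivative
           A1 p0 * I2 (b p0) (A p0) k + phi (b p0) * phi (A p0 - k * b p0) * b') (at p0)"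
proof -
  have p00: "\<bar>p0 - p0\<bar> < d" using \<open>d > 0\<close> by simp
  have B0: "0 \<le> B" using bA1[OF p00] by linarith
  define f where "f p y = phi y * phi (A p - k * y)" for p y
  define f1 where "f1 p y = phi y * (- (A p - k * y) * phi (A p - k * y)) * A1 p" for p y
  define f2 where "f2 p y = phi y * (((A p - k * y)\<^sup>2 - 1) * phi (A p - k * y) * A1 p * A1 p
                     + (- (A p - k * y) * phi (A p - k * y)) * A2 p)" for p y
  define g where "g y = (B * B + B) * phi y + 0 * (phi y * \<bar>y\<bar>) + 0 * (phi y * \<bar>y\<bar>\<^sup>2)" for y
  have main: "((\<lambda>p. integral {..b p} (f p)) has_real_derivative
            integral {..b p0} (f1 p0) + f p0 (b p0) * b') (at p0)"
  proof (rule moving_bound[OF \<open>d > 0\<close>, where ?f2.0 = f2 and g = g and M = B])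
    fix p assume p: "\<bar>p - p0\<bar> < d"
    show "continuous_on UNIV (f p)" unfolding f_def by (intro continuous_intros)
    show "f p integrable_on {..u}" for u unfolding f_def by (rule int_I0)
    fix y
    let ?u = "A p - k * y"
    show "((\<lambda>p. f p y) has_real_derivative f1 p y) (at p)"
      unfolding f_def f1_def using dA[OF p]
      by - ((rule derivative_eq_intros refl | assumption)+, simp add: algebra_simps)
    show "((\<lambda>p. f1 p y) has_real_derivative f2 p y) (at p)"
      unfolding f1_def f2_def using dA[OF p] dA1[OF p]
      by - ((rule derivative_eq_intros refl | assumption)+, simp add: algebra_simps power2_eq_square)
    have "\<bar>((?u)\<^sup>2 - 1) * phi ?u * A1 p * A1 p + (- ?u * phi ?u) * A2 p\<bar>
        \<le> \<bar>((?u)\<^sup>2 - 1) * phi ?u\<bar> * (\<bar>A1 p\<bar> * \<bar>A1 p\<bar>) + \<bar>?u * phi ?u\<bar> * \<bar>A2 p\<bar>"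
    proof -
      have "\<bar>((?u)\<^sup>2 - 1) * phi ?u * A1 p * A1 p\<bar> = \<bar>((?u)\<^sup>2 - 1) * phi ?u\<bar> * (\<bar>A1 p\<bar> * \<bar>A1 p\<bar>)"
        by (simp only: abs_mult mult.assoc)
      moreover have "\<bar>(- ?u * phi ?u) * A2 p\<bar> = \<bar>?u * phi ?u\<bar> * \<bar>A2 p\<bar>"
        by (simp only: abs_mult abs_minus_cancel mult_minus_left)
      ultimately show ?thesis by (metis abs_triangle_ineq)
    qed
    also have "\<dots> \<le> 1 * (B * B) + 1 * B"
      using t2_phi_bound[of ?u] t_phi_bound[of ?u] bA1[OF p] bA2[OF p]
      by (intro add_mono mult_mono) (auto intro: mult_mono)
    finally have "\<bar>((?u)\<^sup>2 - 1) * phi ?u * A1 p * A1 p + (- ?u * phi ?u) * A2 p\<bar> \<le> B * B + B" by simp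
    then show "\<bar>f2 p y\<bar> \<le> g y"
      unfolding f2_def g_def by (simp add: abs_mult phi_nonneg mult_left_mono mult.commute)
    have "\<bar>f1 p y\<bar> = phi y * (\<bar>?u * phi ?u\<bar> * \<bar>A1 p\<bar>)"
      unfolding f1_def by (simp only: abs_mult abs_minus_cancel) (simp add: phi_nonneg)
    also have "\<dots> \<le> 1 * (1 * B)"
      using t_phi_bound[of ?u] bA1[OF p] phi_le1[of y]
      by (intro mult_mono) (auto simp: phi_nonneg)
    finally show "\<bar>f1 p y\<bar> \<le> B" by simp
  next
    show "f1 p0 integrable_on {..b p0}"
      unfolding f1_def by (intro integrable_on_mult_left int_I2)
    show "g integrable_on {..b p0}" unfolding g_def by (rule g3_int)
  qed (rule db)
  have eqI: "integral {..b p0} (f1 p0) = A1 p0 * I2 (b p0) (A p0) k"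
    unfolding f1_def I2_def using int_I2
    by (simp add: integral_mult_left mult.commute)
  show ?thesis using main unfolding eqI f_def I0_def by simp
qed

lemma N2_integrand_factor:
  assumes r: "\<bar>\<rho>\<bar> < 1"
  shows "exp (- (y1\<^sup>2 - 2 * \<rho> * y1 * y2 + y2\<^sup>2) / (2 * (1 - \<rho>\<^sup>2))) / (2 * pi * sqrt (1 - \<rho>\<^sup>2))
       = phi y2 * (phi ((y1 - \<rho> * y2) / sqrt (1 - \<rho>\<^sup>2)) / sqrt (1 - \<rho>\<^sup>2))"
proof -
  define s where "s = sqrt (1 - \<rho>\<^sup>2)"
  have r2: "\<rho>\<^sup>2 < 1" using r by (simp add: abs_square_less_1)
  have s0: "s > 0" unfolding s_def using r2 by simp
  have ss: "s\<^sup>2 = 1 - \<rho>\<^sup>2" unfolding s_def using r2 by simp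
  have d0: "1 - \<rho>\<^sup>2 \<noteq> 0" using r2 by simp
  have e1: "((y1 - \<rho> * y2) / s)\<^sup>2 = (y1 - \<rho> * y2)\<^sup>2 / (1 - \<rho>\<^sup>2)" by (simp add: power_divide ss)
  have "- (y1\<^sup>2 - 2 * \<rho> * y1 * y2 + y2\<^sup>2) / (2 * (1 - \<rho>\<^sup>2)) = - y2\<^sup>2 / 2 + - ((y1 - \<rho> * y2)\<^sup>2 / (1 - \<rho>\<^sup>2)) / 2"
    using d0 by (simp add: field_simps) (simp add: power2_eq_square algebra_simps power4_eq_xxxx)
  then have ex: "- (y1\<^sup>2 - 2 * \<rho> * y1 * y2 + y2\<^sup>2) / (2 * (1 - \<rho>\<^sup>2)) = - y2\<^sup>2 / 2 + - ((y1 - \<rho> * y2) / s)\<^sup>2 / 2"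
    unfolding e1 .
  have pp: "sqrt (2 * pi) * sqrt (2 * pi) = 2 * pi" by simp
  show ?thesis
    unfolding s_def[symmetric] phi_def ex exp_add
    using s0 pp by (simp add: field_simps)
qed

lemma N2_repr:
  assumes r: "\<bar>\<rho>\<bar> < 1"
  shows "N2 a1 a2 \<rho> = integral {..a2} (\<lambda>y. phi y * Ncdf ((a1 - \<rho> * y) / sqrt (1 - \<rho>\<^sup>2)))"
proof -
  define s where "s = sqrt (1 - \<rho>\<^sup>2)"
  have r2: "\<rho>\<^sup>2 < 1" using r by (simp add: abs_square_less_1)
  have s0: "s > 0" unfolding s_def using r2 by simp
  define F where "F = (\<lambda>(y1::real, y2::real). exp (- (y1\<^sup>2 - 2 * \<rho> * y1 * y2 + y2\<^sup>2) / (2 * (1 - \<rho>\<^sup>2)))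
                  / (2 * pi * sqrt (1 - \<rho>\<^sup>2)))"
  have Feq: "F (y1, y2) = phi y2 * (phi ((y1 - \<rho> * y2) / s) / s)" for y1 y2
    unfolding F_def s_def using N2_integrand_factor[OF r] by simp
  define G where "G y = phi y * Ncdf ((a1 - \<rho> * y) / s)" for y
  have Geq: "G = (\<lambda>y. phi y * Ncdf (a1 / s - \<rho> / s * y))"
    unfolding G_def by (rule ext) (simp add: diff_divide_distrib)
  have Gint: "G integrable_on {..a2}" unfolding Geq by (rule int_H)
  define J where "J = integral {..a2} G"
  have GJ: "(G has_integral J) {..a2}" unfolding J_def using Gint by (simp add: integrable_integral)
  have Gnn: "0 \<le> G y" for y unfolding G_def by (simp add: phi_nonneg Ncdf_nonneg)
  have J0: "0 \<le> J" unfolding J_def by (rule integral_nonneg[OF Gint]) (simp add: Gnn)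
  define S where "S = {..a1} \<times> {..a2}"
  define h where "h z = indicator S z * F z" for z
  have Fcont: "continuous_on UNIV F"
    unfolding F_def case_prod_unfold by (intro continuous_intros) (use r2 in auto)
  have hmeas: "h \<in> borel_measurable borel"
    unfolding h_def S_def
    by (intro borel_measurable_times borel_measurable_indicator borel_measurable_continuous_onI Fcont)
       (auto intro!: borel_closed closed_Times)
  have Fnn: "0 \<le> F z" for z by (cases z) (simp add: Feq phi_nonneg s0 less_imp_le)
  have hnn: "0 \<le> h z" for z unfolding h_def by (simp add: Fnn)
  have inner: "(\<integral>\<^sup>+y1. ennreal (h (y1, y2)) \<partial>lborel) = ennreal (indicator {..a2} y2 * G y2)" for y2
  proof -
    let ?c = "indicator {..a2} y2 * phi y2 :: real"
    let ?k = "\<lambda>y1. indicator {..a1} y1 * (phi ((y1 - \<rho> * y2) / s) / s) :: real"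
    have kmeas[measurable]: "?k \<in> borel_measurable borel"
      by (intro borel_measurable_times borel_measurable_indicator borel_measurable_continuous_onI)
         (use s0 in \<open>auto intro!: continuous_intros\<close>)
    have "(\<lambda>y1. ennreal (h (y1, y2))) = (\<lambda>y1. ennreal ?c * ennreal (?k y1))"
      by (rule ext) (simp add: h_def S_def Feq indicator_def phi_nonneg s0 ennreal_mult'[symmetric])
    then have "(\<integral>\<^sup>+y1. ennreal (h (y1, y2)) \<partial>lborel) = (\<integral>\<^sup>+y1. ennreal ?c * ennreal (?k y1) \<partial>lborel)"
      by simp
    also have "\<dots> = ennreal ?c * (\<integral>\<^sup>+y1. ennreal (?k y1) \<partial>lborel)"
      by (rule nn_integral_cmult) measurable
    also have "(\<integral>\<^sup>+y1. ennreal (?k y1) \<partial>lborel) = ennreal (Ncdf ((a1 - \<rho> * y2) / s))"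
    proof (rule nn_integral_has_integral_lborel)
      show "?k \<in> borel_measurable borel"
        by (intro borel_measurable_times borel_measurable_indicator borel_measurable_continuous_onI)
           (use s0 in \<open>auto intro!: continuous_intros\<close>)
      show "0 \<le> ?k x" for x by (simp add: phi_nonneg s0 indicator_def less_imp_le)
      show "(?k has_integral Ncdf ((a1 - \<rho> * y2) / s)) UNIV" by (rule inner_affine[OF s0])
    qed
    also have "ennreal ?c * ennreal (Ncdf ((a1 - \<rho> * y2) / s)) = ennreal (indicator {..a2} y2 * G y2)"
      by (simp add: ennreal_mult'[symmetric] G_def phi_nonneg indicator_def)
    finally show ?thesis .
  qed
  have "(\<integral>\<^sup>+z. ennreal (h z) \<partial>lborel) = (\<integral>\<^sup>+y2. (\<integral>\<^sup>+y1. ennreal (h (y1, y2)) \<partial>lborel) \<partial>lborel)"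
  proof -
    have m: "(\<lambda>z. ennreal (h z)) \<in> borel_measurable (lborel \<Otimes>\<^sub>M lborel)"
      unfolding lborel_prod using hmeas by simp
    show ?thesis
      using lborel_pair.nn_integral_snd[OF m] unfolding lborel_prod by simp
  qed
  also have "\<dots> = (\<integral>\<^sup>+y2. ennreal (indicator {..a2} y2 * G y2) \<partial>lborel)"
    by (simp add: inner)
  also have "\<dots> = ennreal J"
    using nn_integral_has_integral_lebesgue[OF _ GJ] Gnn by simp
  finally have nnJ: "(\<integral>\<^sup>+z. ennreal (h z) \<partial>lborel) = ennreal J" .
  have "(h has_integral J) UNIV"
    by (rule nn_integral_has_integral[OF hmeas hnn nnJ J0])
  moreover have "h = (\<lambda>z. if z \<in> S then F z else 0)"
    by (rule ext) (simp add: h_def indicator_def)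
  ultimately have "(F has_integral J) S" by (simp add: has_integral_restrict_UNIV)
  then have "N2 a1 a2 \<rho> = J"
    unfolding N2_def F_def[symmetric] S_def[symmetric] by (rule integral_unique)
  then show ?thesis unfolding J_def G_def s_def .
qed

locale pdeloc =
  fixes r q \<sigma> \<beta> i L K \<tau>1 \<tau>2 \<tau>3 :: real
  assumes \<sigma>pos: "\<sigma> > 0" and \<tau>3pos: "\<tau>3 > 0"
begin

definition "cR = r - q - \<sigma>\<^sup>2 / 2"
definition "mR = cR + \<sigma>\<^sup>2 * \<beta>"
definition "A0 = - ln L + cR * \<tau>1 + \<sigma>\<^sup>2 * \<tau>2"
definition "alf x \<tau> = (i * (x + mR * \<tau>) + A0) / (\<sigma> * sqrt \<tau>3)"
definition "a2f x \<tau> = (x - ln K + mR * \<tau>) / (\<sigma> * sqrt \<tau>)"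
definition "kf \<tau> = i * sqrt \<tau> / sqrt \<tau>3"
definition "Zp x \<tau> = Hf (a2f x \<tau>) (alf x \<tau>) (kf \<tau>)"
definition "Zpx x \<tau> = phi (a2f x \<tau>) * Ncdf (alf x \<tau> - kf \<tau> * a2f x \<tau>) * (1 / (\<sigma> * sqrt \<tau>))
                     + I0 (a2f x \<tau>) (alf x \<tau>) (kf \<tau>) * (i / (\<sigma> * sqrt \<tau>3))"
definition "Zpxx x \<tau> = (- a2f x \<tau> * phi (a2f x \<tau>) * (1 / (\<sigma> * sqrt \<tau>)) * Ncdf (alf x \<tau> - kf \<tau> * a2f x \<tau>)
        + phi (a2f x \<tau>) * (phi (alf x \<tau> - kf \<tau> * a2f x \<tau>) * (i / (\<sigma> * sqrt \<tau>3) - kf \<tau> * (1 / (\<sigma> * sqrt \<tau>))))) * (1 / (\<sigma> * sqrt \<tau>))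
     + ((i / (\<sigma> * sqrt \<tau>3)) * I2 (a2f x \<tau>) (alf x \<tau>) (kf \<tau>)
        + phi (a2f x \<tau>) * phi (alf x \<tau> - kf \<tau> * a2f x \<tau>) * (1 / (\<sigma> * sqrt \<tau>))) * (i / (\<sigma> * sqrt \<tau>3))"
definition "a2t x \<tau> = mR / (\<sigma> * sqrt \<tau>) - a2f x \<tau> / (2 * \<tau>)"
definition "Zpt x \<tau> = (i * mR / (\<sigma> * sqrt \<tau>3)) * I0 (a2f x \<tau>) (alf x \<tau>) (kf \<tau>)
     + (i / (2 * sqrt \<tau> * sqrt \<tau>3)) * I1 (a2f x \<tau>) (alf x \<tau>) (kf \<tau>)
     + phi (a2f x \<tau>) * Ncdf (alf x \<tau> - kf \<tau> * a2f x \<tau>) * a2t x \<tau>"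

lemma d_alf_x: "((\<lambda>x. alf x \<tau>) has_real_derivative i / (\<sigma> * sqrt \<tau>3)) (at x)"
  unfolding alf_def using \<sigma>pos \<tau>3pos by (auto intro!: derivative_eq_intros)

lemma d_a2f_x: "\<tau> > 0 \<Longrightarrow> ((\<lambda>x. a2f x \<tau>) has_real_derivative 1 / (\<sigma> * sqrt \<tau>)) (at x)"
  unfolding a2f_def using \<sigma>pos by (auto intro!: derivative_eq_intros)

lemma d_alf_t: "((\<lambda>\<tau>. alf x \<tau>) has_real_derivative i * mR / (\<sigma> * sqrt \<tau>3)) (at \<tau>)"
  unfolding alf_def using \<sigma>pos \<tau>3pos by (auto intro!: derivative_eq_intros)

lemma alg_a2t:
  assumes "u > 0"
  shows "(mR * (\<sigma> * u) - (x - ln K + mR * (u * u)) * (\<sigma> * (inverse u / 2))) / ((\<sigma> * u) * (\<sigma> * u))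
       = mR / (\<sigma> * u) - ((x - ln K + mR * (u * u)) / (\<sigma> * u)) / (2 * (u * u))"
  using assms \<sigma>pos by (simp add: field_simps)

lemma d_a2f_t: assumes "\<tau> > 0" shows "((\<lambda>\<tau>. a2f x \<tau>) has_real_derivative a2t x \<tau>) (at \<tau>)"
proof -
  have dn: "((\<lambda>\<tau>. x - ln K + mR * \<tau>) has_real_derivative mR) (at \<tau>)"
    by (auto intro!: derivative_eq_intros)
  have dd: "((\<lambda>\<tau>. \<sigma> * sqrt \<tau>) has_real_derivative \<sigma> * (inverse (sqrt \<tau>) / 2)) (at \<tau>)"
    by (intro DERIV_cmult DERIV_real_sqrt assms)
  have D: "((\<lambda>\<tau>. (x - ln K + mR * \<tau>) / (\<sigma> * sqrt \<tau>)) has_real_derivative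
      (mR * (\<sigma> * sqrt \<tau>) - (x - ln K + mR * \<tau>) * (\<sigma> * (inverse (sqrt \<tau>) / 2))) / ((\<sigma> * sqrt \<tau>) * (\<sigma> * sqrt \<tau>))) (at \<tau>)"
    by (rule DERIV_divide[OF dn dd]) (use \<sigma>pos assms in simp)
  have u: "sqrt \<tau> > 0" using assms by simp
  have t: "\<tau> = sqrt \<tau> * sqrt \<tau>" using assms by simp
  have "(mR * (\<sigma> * sqrt \<tau>) - (x - ln K + mR * \<tau>) * (\<sigma> * (inverse (sqrt \<tau>) / 2))) / ((\<sigma> * sqrt \<tau>) * (\<sigma> * sqrt \<tau>))
      = a2t x \<tau>"
    unfolding a2t_def a2f_def
    using alg_a2t[OF u, of x] t[symmetric] by simp
  then show ?thesis using D unfolding a2f_def by simp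
qed

lemma Zp_dx: assumes "\<tau> > 0" shows "((\<lambda>x. Zp x \<tau>) has_real_derivative Zpx x \<tau>) (at x)"
proof -
  have "((\<lambda>p. Hf (a2f p \<tau>) (alf p \<tau>) (kf \<tau>)) has_real_derivative
           i / (\<sigma> * sqrt \<tau>3) * I0 (a2f x \<tau>) (alf x \<tau>) (kf \<tau>) + 0 * I1 (a2f x \<tau>) (alf x \<tau>) (kf \<tau>)
           + phi (a2f x \<tau>) * Ncdf (alf x \<tau> - kf \<tau> * a2f x \<tau>) * (1 / (\<sigma> * sqrt \<tau>))) (at x)"
    by (rule path_H[where d = 1 and A = "\<lambda>p. alf p \<tau>" and Kp = "\<lambda>_. kf \<tau>" and ?A1.0 = "\<lambda>_. i / (\<sigma> * sqrt \<tau>3)"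
          and ?A2.0 = "\<lambda>_. 0" and ?K1.0 = "\<lambda>_. 0" and ?K2.0 = "\<lambda>_. 0" and B = "\<bar>i / (\<sigma> * sqrt \<tau>3)\<bar>"])
       (auto intro: d_alf_x d_a2f_x assms)
  then show ?thesis unfolding Zp_def Zpx_def by (simp add: algebra_simps)
qed

lemma Zpx_dx: assumes "\<tau> > 0" shows "((\<lambda>x. Zpx x \<tau>) has_real_derivative Zpxx x \<tau>) (at x)"
proof -
  have I0d: "((\<lambda>p. I0 (a2f p \<tau>) (alf p \<tau>) (kf \<tau>)) has_real_derivative
           i / (\<sigma> * sqrt \<tau>3) * I2 (a2f x \<tau>) (alf x \<tau>) (kf \<tau>)
           + phi (a2f x \<tau>) * phi (alf x \<tau> - kf \<tau> * a2f x \<tau>) * (1 / (\<sigma> * sqrt \<tau>))) (at x)"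
    by (rule path_I0[where d = 1 and A = "\<lambda>p. alf p \<tau>" and ?A1.0 = "\<lambda>_. i / (\<sigma> * sqrt \<tau>3)"
          and ?A2.0 = "\<lambda>_. 0" and B = "\<bar>i / (\<sigma> * sqrt \<tau>3)\<bar>"])
       (auto intro: d_alf_x d_a2f_x assms)
  have t1: "((\<lambda>x. phi (a2f x \<tau>)) has_real_derivative (- a2f x \<tau> * phi (a2f x \<tau>)) * (1 / (\<sigma> * sqrt \<tau>))) (at x)"
    by (rule DERIV_phi_chain[OF d_a2f_x[OF assms]])
  have t2: "((\<lambda>x. Ncdf (alf x \<tau> - kf \<tau> * a2f x \<tau>)) has_real_derivative
       phi (alf x \<tau> - kf \<tau> * a2f x \<tau>) * (i / (\<sigma> * sqrt \<tau>3) - kf \<tau> * (1 / (\<sigma> * sqrt \<tau>)))) (at x)"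
    by (intro DERIV_Ncdf_chain DERIV_diff d_alf_x DERIV_cmult d_a2f_x[OF assms])
  note D = DERIV_add[OF DERIV_cmult_right[OF DERIV_mult[OF t1 t2], of "1 / (\<sigma> * sqrt \<tau>)"]
                       DERIV_cmult_right[OF I0d, of "i / (\<sigma> * sqrt \<tau>3)"]]
  show ?thesis unfolding Zpx_def
    by (rule DERIV_cong[OF D]) (simp add: Zpxx_def algebra_simps)
qed

lemma d_kf: assumes "\<tau> > 0" shows "(kf has_real_derivative i / (2 * sqrt \<tau> * sqrt \<tau>3)) (at \<tau>)"
proof -
  have "((\<lambda>\<tau>. i * sqrt \<tau> / sqrt \<tau>3) has_real_derivative i * (inverse (sqrt \<tau>) / 2) / sqrt \<tau>3) (at \<tau>)"
    by (intro DERIV_cdivide DERIV_cmult DERIV_real_sqrt assms)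
  moreover have "i * (inverse (sqrt \<tau>) / 2) / sqrt \<tau>3 = i / (2 * sqrt \<tau> * sqrt \<tau>3)"
    by (simp add: field_simps)
  ultimately show ?thesis unfolding kf_def[abs_def] by simp
qed

lemma d_kf1: assumes "\<tau> > 0"
  shows "((\<lambda>\<tau>. i / (2 * sqrt \<tau> * sqrt \<tau>3)) has_real_derivative - i / (4 * \<tau> * sqrt \<tau> * sqrt \<tau>3)) (at \<tau>)"
proof -
  have u: "sqrt \<tau> > 0" using assms by simp
  have "((\<lambda>\<tau>. inverse (sqrt \<tau>)) has_real_derivative - ((inverse (sqrt \<tau>) / 2) * inverse ((sqrt \<tau>) ^ Suc (Suc 0)))) (at \<tau>)"
    by (rule DERIV_inverse_fun[OF DERIV_real_sqrt[OF assms]]) (use u in simp)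
  then have "((\<lambda>\<tau>. (i / (2 * sqrt \<tau>3)) * inverse (sqrt \<tau>)) has_real_derivative
          (i / (2 * sqrt \<tau>3)) * (- ((inverse (sqrt \<tau>) / 2) * inverse ((sqrt \<tau>) ^ Suc (Suc 0))))) (at \<tau>)"
    by (rule DERIV_cmult)
  moreover have "(\<lambda>\<tau>. (i / (2 * sqrt \<tau>3)) * inverse (sqrt \<tau>)) = (\<lambda>\<tau>. i / (2 * sqrt \<tau> * sqrt \<tau>3))"
    by (rule ext) (simp add: field_simps)
  moreover have "(i / (2 * sqrt \<tau>3)) * (- ((inverse (sqrt \<tau>) / 2) * inverse ((sqrt \<tau>) ^ Suc (Suc 0))))
      = - i / (4 * \<tau> * sqrt \<tau> * sqrt \<tau>3)"
    using u assms \<tau>3pos by (simp add: field_simps)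
  ultimately show ?thesis by simp
qed

lemma Zp_dt: assumes t0: "\<tau>0 > 0" shows "((\<lambda>\<tau>. Zp x \<tau>) has_real_derivative Zpt x \<tau>0) (at \<tau>0)"
proof -
  define h where "h = \<tau>0 / 2"
  have h0: "h > 0" unfolding h_def using t0 by simp
  define B where "B = \<bar>i * mR / (\<sigma> * sqrt \<tau>3)\<bar> + \<bar>i\<bar> / (sqrt h * sqrt \<tau>3) + \<bar>i\<bar> / (h * sqrt h * sqrt \<tau>3)"
  have near: "\<tau> > h" if "\<bar>\<tau> - \<tau>0\<bar> < h" for \<tau> using that unfolding h_def abs_less_iff by linarith
  have B1: "\<bar>i / (2 * sqrt \<tau> * sqrt \<tau>3)\<bar> \<le> B" if "\<bar>\<tau> - \<tau>0\<bar> < h" for \<tau>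
  proof -
    have tp: "\<tau> > h" by (rule near[OF that])
    have "sqrt h \<le> sqrt \<tau>" using tp by simp
    moreover have "0 \<le> sqrt \<tau>" using tp h0 by simp
    ultimately have "sqrt h \<le> 2 * sqrt \<tau>" by linarith
    then have "sqrt h * sqrt \<tau>3 \<le> 2 * sqrt \<tau> * sqrt \<tau>3" using \<tau>3pos h0 by (simp add: mult_right_mono)
    then have "\<bar>i\<bar> / (2 * sqrt \<tau> * sqrt \<tau>3) \<le> \<bar>i\<bar> / (sqrt h * sqrt \<tau>3)"
      using h0 \<tau>3pos tp by (intro divide_left_mono) auto
    moreover have "\<bar>i / (2 * sqrt \<tau> * sqrt \<tau>3)\<bar> = \<bar>i\<bar> / (2 * sqrt \<tau> * sqrt \<tau>3)"
      using tp h0 \<tau>3pos by (simp add: abs_divide abs_mult)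
    moreover have "0 \<le> \<bar>i * mR / (\<sigma> * sqrt \<tau>3)\<bar>" by simp
    moreover have "0 \<le> \<bar>i\<bar> / (h * sqrt h * sqrt \<tau>3)" using h0 \<tau>3pos by simp
    moreover have "0 \<le> \<bar>i\<bar> / (sqrt h * sqrt \<tau>3)" using h0 \<tau>3pos by simp
    ultimately show ?thesis unfolding B_def by linarith
  qed
  have B2: "\<bar>- i / (4 * \<tau> * sqrt \<tau> * sqrt \<tau>3)\<bar> \<le> B" if "\<bar>\<tau> - \<tau>0\<bar> < h" for \<tau>
  proof -
    have tp: "\<tau> > h" by (rule near[OF that])
    have "sqrt h \<le> sqrt \<tau>" using tp by simp
    then have "h * sqrt h \<le> \<tau> * sqrt \<tau>" using tp h0 by (intro mult_mono) auto
    moreover have "0 \<le> \<tau> * sqrt \<tau>" using tp h0 by simp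
    ultimately have "h * sqrt h \<le> 4 * (\<tau> * sqrt \<tau>)" by linarith
    then have "h * sqrt h * sqrt \<tau>3 \<le> 4 * \<tau> * sqrt \<tau> * sqrt \<tau>3"
      using \<tau>3pos h0 tp by (simp add: mult_right_mono mult.assoc)
    then have "\<bar>i\<bar> / (4 * \<tau> * sqrt \<tau> * sqrt \<tau>3) \<le> \<bar>i\<bar> / (h * sqrt h * sqrt \<tau>3)"
      using h0 \<tau>3pos tp by (intro divide_left_mono) auto
    moreover have "\<bar>- i / (4 * \<tau> * sqrt \<tau> * sqrt \<tau>3)\<bar> = \<bar>i\<bar> / (4 * \<tau> * sqrt \<tau> * sqrt \<tau>3)"
      using tp h0 \<tau>3pos by (simp add: abs_divide abs_mult)
    moreover have "0 \<le> \<bar>i * mR / (\<sigma> * sqrt \<tau>3)\<bar>" by simp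
    moreover have "0 \<le> \<bar>i\<bar> / (h * sqrt h * sqrt \<tau>3)" using h0 \<tau>3pos by simp
    moreover have "0 \<le> \<bar>i\<bar> / (sqrt h * sqrt \<tau>3)" using h0 \<tau>3pos by simp
    ultimately show ?thesis unfolding B_def by linarith
  qed
  have BA: "\<bar>i * mR / (\<sigma> * sqrt \<tau>3)\<bar> \<le> B" unfolding B_def using h0 \<tau>3pos by simp
  have B0: "0 \<le> B" using BA by linarith
  have "((\<lambda>p. Hf (a2f x p) (alf x p) (kf p)) has_real_derivative
           i * mR / (\<sigma> * sqrt \<tau>3) * I0 (a2f x \<tau>0) (alf x \<tau>0) (kf \<tau>0)
           + i / (2 * sqrt \<tau>0 * sqrt \<tau>3) * I1 (a2f x \<tau>0) (alf x \<tau>0) (kf \<tau>0)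
           + phi (a2f x \<tau>0) * Ncdf (alf x \<tau>0 - kf \<tau>0 * a2f x \<tau>0) * a2t x \<tau>0) (at \<tau>0)"
  proof (rule path_H[where d = h and A = "\<lambda>p. alf x p" and Kp = kf and ?A1.0 = "\<lambda>_. i * mR / (\<sigma> * sqrt \<tau>3)"
          and ?A2.0 = "\<lambda>_. 0" and ?K1.0 = "\<lambda>\<tau>. i / (2 * sqrt \<tau> * sqrt \<tau>3)"
          and ?K2.0 = "\<lambda>\<tau>. - i / (4 * \<tau> * sqrt \<tau> * sqrt \<tau>3)" and B = B])
    show "0 < h" by (rule h0)
    fix p assume p: "\<bar>p - \<tau>0\<bar> < h"
    have pp: "p > 0" using near[OF p] h0 by simp
    show "((\<lambda>p. alf x p) has_real_derivative i * mR / (\<sigma> * sqrt \<tau>3)) (at p)" by (rule d_alf_t)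
    show "((\<lambda>_. i * mR / (\<sigma> * sqrt \<tau>3)) has_real_derivative 0) (at p)" by simp
    show "(kf has_real_derivative i / (2 * sqrt p * sqrt \<tau>3)) (at p)" by (rule d_kf[OF pp])
    show "((\<lambda>\<tau>. i / (2 * sqrt \<tau> * sqrt \<tau>3)) has_real_derivative - i / (4 * p * sqrt p * sqrt \<tau>3)) (at p)"
      by (rule d_kf1[OF pp])
    show "\<bar>i * mR / (\<sigma> * sqrt \<tau>3)\<bar> \<le> B" by (rule BA)
    show "\<bar>0::real\<bar> \<le> B" using B0 by simp
    show "\<bar>i / (2 * sqrt p * sqrt \<tau>3)\<bar> \<le> B" by (rule B1[OF p])
    show "\<bar>- i / (4 * p * sqrt p * sqrt \<tau>3)\<bar> \<le> B" by (rule B2[OF p])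
  next
    show "((\<lambda>p. a2f x p) has_real_derivative a2t x \<tau>0) (at \<tau>0)" by (rule d_a2f_t[OF t0])
  qed
  then show ?thesis unfolding Zp_def Zpt_def .
qed

end

lemma pde_alg:
  fixes u w t \<sigma> i mR a P N Q J0 J1 J2 :: real
  assumes "u > 0" "w > 0" "\<sigma> > 0" "t = u * u" "J1 = P * Q + (i * u / w) * J2"
  shows "(i * mR / (\<sigma> * w)) * J0 + (i / (2 * u * w)) * J1 + P * N * (mR / (\<sigma> * u) - a / (2 * t))
   = \<sigma>\<^sup>2 / 2 * ((- a * P * (1 / (\<sigma> * u)) * N + P * (Q * (i / (\<sigma> * w) - (i * u / w) * (1 / (\<sigma> * u))))) * (1 / (\<sigma> * u))
       + ((i / (\<sigma> * w)) * J2 + P * Q * (1 / (\<sigma> * u))) * (i / (\<sigma> * w)))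
     + mR * (P * N * (1 / (\<sigma> * u)) + J0 * (i / (\<sigma> * w)))"
proof -
  have "(i * mR / (\<sigma> * w)) * J0 + (i / (2 * u * w)) * (P * Q + (i * u / w) * J2) + P * N * (mR / (\<sigma> * u) - a / (2 * (u * u)))
   = \<sigma>\<^sup>2 / 2 * ((- a * P * (1 / (\<sigma> * u)) * N + P * (Q * (i / (\<sigma> * w) - (i * u / w) * (1 / (\<sigma> * u))))) * (1 / (\<sigma> * u))
       + ((i / (\<sigma> * w)) * J2 + P * Q * (1 / (\<sigma> * u))) * (i / (\<sigma> * w)))
     + mR * (P * N * (1 / (\<sigma> * u)) + J0 * (i / (\<sigma> * w)))"
    using assms(1-3) by (simp add: field_simps power2_eq_square)
  then show ?thesis using assms(4,5) by simp
qed

context pdeloc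
begin

lemma Zp_pde:
  assumes "\<tau> > 0"
  shows "Zpt x \<tau> = \<sigma>\<^sup>2 / 2 * Zpxx x \<tau> + mR * Zpx x \<tau>"
proof -
  have u: "sqrt \<tau> > 0" using assms by simp
  have w: "sqrt \<tau>3 > 0" using \<tau>3pos by simp
  have t: "\<tau> = sqrt \<tau> * sqrt \<tau>" using assms by simp
  have J1: "I1 (a2f x \<tau>) (alf x \<tau>) (kf \<tau>) = phi (a2f x \<tau>) * phi (alf x \<tau> - kf \<tau> * a2f x \<tau>)
      + (i * sqrt \<tau> / sqrt \<tau>3) * I2 (a2f x \<tau>) (alf x \<tau>) (kf \<tau>)"
    using I_identity[of "a2f x \<tau>" "alf x \<tau>" "kf \<tau>"] unfolding kf_def by simp
  show ?thesis
    unfolding Zpt_def Zpxx_def Zpx_def a2t_def kf_def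
    using pde_alg[OF u w \<sigma>pos t J1[unfolded kf_def], of mR "I0 (a2f x \<tau>) (alf x \<tau>) (kf \<tau>)"
        "Ncdf (alf x \<tau> - i * sqrt \<tau> / sqrt \<tau>3 * a2f x \<tau>)"]
    unfolding kf_def by simp
qed

definition "Dd \<tau> = \<tau>3 + i\<^sup>2 * \<tau>"
definition "a1f x \<tau> = (i * (x + mR * \<tau>) + A0) / (\<sigma> * sqrt (Dd \<tau>))"
definition "Z0 x \<tau> = Ncdf (a1f x \<tau>)"
definition "Z0x x \<tau> = phi (a1f x \<tau>) * (i / (\<sigma> * sqrt (Dd \<tau>)))"
definition "Z0xx x \<tau> = (- a1f x \<tau> * phi (a1f x \<tau>)) * (i / (\<sigma> * sqrt (Dd \<tau>))) * (i / (\<sigma> * sqrt (Dd \<tau>)))"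
definition "a1t x \<tau> = i * mR / (\<sigma> * sqrt (Dd \<tau>)) - a1f x \<tau> * i\<^sup>2 / (2 * Dd \<tau>)"
definition "Z0t x \<tau> = phi (a1f x \<tau>) * a1t x \<tau>"

lemma Dd_pos: "\<tau> \<ge> 0 \<Longrightarrow> Dd \<tau> > 0"
  unfolding Dd_def using \<tau>3pos by (simp add: add_pos_nonneg)

lemma d_a1f_x: assumes "\<tau> \<ge> 0" shows "((\<lambda>x. a1f x \<tau>) has_real_derivative i / (\<sigma> * sqrt (Dd \<tau>))) (at x)"
  unfolding a1f_def using \<sigma>pos Dd_pos[OF assms] by (auto intro!: derivative_eq_intros)

lemma Z0_dx: "\<tau> \<ge> 0 \<Longrightarrow> ((\<lambda>x. Z0 x \<tau>) has_real_derivative Z0x x \<tau>) (at x)"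
  unfolding Z0_def Z0x_def by (rule DERIV_Ncdf_chain[OF d_a1f_x])

lemma Z0x_dx: "\<tau> \<ge> 0 \<Longrightarrow> ((\<lambda>x. Z0x x \<tau>) has_real_derivative Z0xx x \<tau>) (at x)"
  unfolding Z0x_def Z0xx_def by (intro DERIV_cmult_right DERIV_phi_chain[OF d_a1f_x])

lemma d_a1f_t: assumes "\<tau> \<ge> 0" shows "((\<lambda>\<tau>. a1f x \<tau>) has_real_derivative a1t x \<tau>) (at \<tau>)"
proof -
  have D: "Dd \<tau> > 0" by (rule Dd_pos[OF assms])
  have dn: "((\<lambda>\<tau>. i * (x + mR * \<tau>) + A0) has_real_derivative i * mR) (at \<tau>)"
    by (auto intro!: derivative_eq_intros)
  have dD: "(Dd has_real_derivative i\<^sup>2) (at \<tau>)"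
    unfolding Dd_def[abs_def] by (auto intro!: derivative_eq_intros)
  have dd: "((\<lambda>\<tau>. \<sigma> * sqrt (Dd \<tau>)) has_real_derivative \<sigma> * (inverse (sqrt (Dd \<tau>)) / 2 * i\<^sup>2)) (at \<tau>)"
    by (intro DERIV_cmult DERIV_chain2[OF DERIV_real_sqrt[OF D] dD])
  have Q: "((\<lambda>\<tau>. (i * (x + mR * \<tau>) + A0) / (\<sigma> * sqrt (Dd \<tau>))) has_real_derivative
      (i * mR * (\<sigma> * sqrt (Dd \<tau>)) - (i * (x + mR * \<tau>) + A0) * (\<sigma> * (inverse (sqrt (Dd \<tau>)) / 2 * i\<^sup>2)))
        / ((\<sigma> * sqrt (Dd \<tau>)) * (\<sigma> * sqrt (Dd \<tau>)))) (at \<tau>)"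
    by (rule DERIV_divide[OF dn dd]) (use \<sigma>pos D in simp)
  have s: "sqrt (Dd \<tau>) > 0" using D by simp
  have ss: "Dd \<tau> = sqrt (Dd \<tau>) * sqrt (Dd \<tau>)" using D by simp
  have "(i * mR * (\<sigma> * sqrt (Dd \<tau>)) - (i * (x + mR * \<tau>) + A0) * (\<sigma> * (inverse (sqrt (Dd \<tau>)) / 2 * i\<^sup>2)))
        / ((\<sigma> * sqrt (Dd \<tau>)) * (\<sigma> * sqrt (Dd \<tau>))) = a1t x \<tau>"
  proof -
    define v where "v = sqrt (Dd \<tau>)"
    define n where "n = i * (x + mR * \<tau>) + A0"
    have v: "v > 0" unfolding v_def by (rule s)
    have "(i * mR * (\<sigma> * v) - n * (\<sigma> * (inverse v / 2 * i\<^sup>2))) / ((\<sigma> * v) * (\<sigma> * v))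
        = i * mR / (\<sigma> * v) - n / (\<sigma> * v) * i\<^sup>2 / (2 * (v * v))"
      using v \<sigma>pos by (simp add: field_simps)
    then show ?thesis unfolding a1t_def a1f_def v_def[symmetric] n_def[symmetric] ss[folded v_def, symmetric]
      by simp
  qed
  then show ?thesis using Q unfolding a1f_def by simp
qed

lemma Z0_dt: "\<tau> \<ge> 0 \<Longrightarrow> ((\<lambda>\<tau>. Z0 x \<tau>) has_real_derivative Z0t x \<tau>) (at \<tau>)"
  unfolding Z0_def Z0t_def by (rule DERIV_Ncdf_chain[OF d_a1f_t])

lemma Z0_pde:
  assumes "\<tau> \<ge> 0"
  shows "Z0t x \<tau> = \<sigma>\<^sup>2 / 2 * Z0xx x \<tau> + mR * Z0x x \<tau>"
proof -
  have D: "Dd \<tau> > 0" by (rule Dd_pos[OF assms])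
  have ss: "sqrt (Dd \<tau>) * sqrt (Dd \<tau>) = Dd \<tau>" using D by simp
  define v where "v = sqrt (Dd \<tau>)"
  have v: "v > 0" unfolding v_def using D by simp
  have "phi (a1f x \<tau>) * (i * mR / (\<sigma> * v) - a1f x \<tau> * i\<^sup>2 / (2 * (v * v)))
      = \<sigma>\<^sup>2 / 2 * ((- a1f x \<tau> * phi (a1f x \<tau>)) * (i / (\<sigma> * v)) * (i / (\<sigma> * v)))
        + mR * (phi (a1f x \<tau>) * (i / (\<sigma> * v)))"
    using v \<sigma>pos by (simp add: field_simps power2_eq_square)
  then show ?thesis
    unfolding Z0t_def Z0xx_def Z0x_def a1t_def v_def ss .
qed

end

lemma Hf_approx:
  "\<bar>Hf b a k - Ncdf a0 * Ncdf b\<bar> \<le> \<bar>a - a0\<bar> + \<bar>k\<bar> * integral UNIV (\<lambda>y. phi y * \<bar>y\<bar>)"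
proof -
  let ?g = "\<lambda>y. \<bar>a - a0\<bar> * phi y + \<bar>k\<bar> * (phi y * \<bar>y\<bar>)"
  have i1: "(\<lambda>y. phi y * \<bar>y\<bar>) integrable_on {..b}" using pm_int[of 1 b] by simp
  have i1U: "(\<lambda>y. phi y * \<bar>y\<bar>) integrable_on UNIV" using phi_moment_integrable_on[of UNIV 1] by simp
  have ig: "?g integrable_on {..b}"
    using pm_int0[of b] i1 by (intro integrable_add integrable_on_mult_right)
  have iH: "(\<lambda>y. phi y * Ncdf (a - k * y)) integrable_on {..b}" by (rule int_H)
  have iN: "(\<lambda>y. phi y * Ncdf a0) integrable_on {..b}" using pm_int0[of b] by (rule integrable_on_mult_left)
  have e1: "Ncdf a0 * Ncdf b = integral {..b} (\<lambda>y. phi y * Ncdf a0)"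
    by (simp add: Ncdf_phi integral_mult_left pm_int0 mult.commute)
  have "Hf b a k - Ncdf a0 * Ncdf b = integral {..b} (\<lambda>y. phi y * Ncdf (a - k * y) - phi y * Ncdf a0)"
    unfolding Hf_def e1 using iH iN by (simp add: Henstock_Kurzweil_Integration.integral_diff)
  also have "\<bar>\<dots>\<bar> \<le> integral {..b} ?g"
  proof -
    have idf: "(\<lambda>y. phi y * Ncdf (a - k * y) - phi y * Ncdf a0) integrable_on {..b}" using iH iN by (rule integrable_diff)
    have pw: "norm (phi y * Ncdf (a - k * y) - phi y * Ncdf a0) \<le> ?g y" if "y \<in> {..b}" for y
    proof -
      have "\<bar>Ncdf (a - k * y) - Ncdf a0\<bar> \<le> \<bar>a - k * y - a0\<bar>" by (rule Ncdf_lip)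
      also have "\<dots> \<le> \<bar>a - a0\<bar> + \<bar>k\<bar> * \<bar>y\<bar>"
        using abs_triangle_ineq4[of "a - a0" "k * y"] by (simp add: abs_mult algebra_simps)
      finally have "phi y * \<bar>Ncdf (a - k * y) - Ncdf a0\<bar> \<le> phi y * (\<bar>a - a0\<bar> + \<bar>k\<bar> * \<bar>y\<bar>)"
        by (intro mult_left_mono phi_nonneg)
      moreover have "norm (phi y * Ncdf (a - k * y) - phi y * Ncdf a0) = phi y * \<bar>Ncdf (a - k * y) - Ncdf a0\<bar>"
        by (simp add: abs_mult phi_nonneg right_diff_distrib[symmetric])
      moreover have "phi y * (\<bar>a - a0\<bar> + \<bar>k\<bar> * \<bar>y\<bar>) = ?g y" by (simp add: algebra_simps)
      ultimately show ?thesis by simp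
    qed
    show ?thesis using integral_norm_bound_integral[OF idf ig pw] by simp
  qed
  also have "integral {..b} ?g = \<bar>a - a0\<bar> * Ncdf b + \<bar>k\<bar> * integral {..b} (\<lambda>y. phi y * \<bar>y\<bar>)"
    using pm_int0[of b] i1 by (simp add: integral_add integrable_on_mult_right Ncdf_phi)
  also have "\<dots> \<le> \<bar>a - a0\<bar> * 1 + \<bar>k\<bar> * integral UNIV (\<lambda>y. phi y * \<bar>y\<bar>)"
  proof (intro add_mono mult_left_mono)
    show "Ncdf b \<le> 1" by (rule Ncdf_le1)
    show "integral {..b} (\<lambda>y. phi y * \<bar>y\<bar>) \<le> integral UNIV (\<lambda>y. phi y * \<bar>y\<bar>)"
      by (rule integral_subset_le[OF _ i1 i1U]) (auto simp: phi_nonneg)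
  qed auto
  finally show ?thesis by simp
qed

context pdeloc
begin

definition "ZZ x \<tau> = (if K = 0 then Z0 x \<tau> else Zp x \<tau>)"
definition "ZZx x \<tau> = (if K = 0 then Z0x x \<tau> else Zpx x \<tau>)"
definition "ZZxx x \<tau> = (if K = 0 then Z0xx x \<tau> else Zpxx x \<tau>)"
definition "ZZt x \<tau> = (if K = 0 then Z0t x \<tau> else Zpt x \<tau>)"

lemma ZZ_dx: "\<tau> > 0 \<Longrightarrow> ((\<lambda>x. ZZ x \<tau>) has_real_derivative ZZx x \<tau>) (at x)"
  unfolding ZZ_def ZZx_def by (cases "K = 0") (auto intro: Z0_dx Zp_dx)

lemma ZZx_dx: "\<tau> > 0 \<Longrightarrow> ((\<lambda>x. ZZx x \<tau>) has_real_derivative ZZxx x \<tau>) (at x)"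
  unfolding ZZx_def ZZxx_def by (cases "K = 0") (auto intro: Z0x_dx Zpx_dx)

lemma ZZ_dt: "\<tau> > 0 \<Longrightarrow> ((\<lambda>\<tau>. ZZ x \<tau>) has_real_derivative ZZt x \<tau>) (at \<tau>)"
  unfolding ZZ_def ZZt_def by (cases "K = 0") (auto intro: Z0_dt Zp_dt)

lemma ZZ_pde: "\<tau> > 0 \<Longrightarrow> ZZt x \<tau> = \<sigma>\<^sup>2 / 2 * ZZxx x \<tau> + mR * ZZx x \<tau>"
  unfolding ZZ_def ZZt_def ZZxx_def ZZx_def using Z0_pde[of \<tau> x] Zp_pde[of \<tau> x] by (cases "K = 0") auto

lemma ln_term: assumes "X > 0" "L > 0"
  shows "ln (X powr i / L) = i * ln X - ln L"
  using assms by (simp add: ln_div ln_powr)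

lemma num_eq: assumes "X > 0" "L > 0"
  shows "ln (X powr i / L) + (r - q - \<sigma>\<^sup>2 / 2) * (\<tau>1 + i * \<tau>) + \<sigma>\<^sup>2 * (\<tau>2 + i * \<beta> * \<tau>)
       = i * (ln X + mR * \<tau>) + A0"
  unfolding ln_term[OF assms] mR_def cR_def A0_def by (simp add: algebra_simps)

lemma Vsol_eq:
  assumes X: "X > 0" and t: "\<tau> > 0" and K0: "K \<ge> 0" and L: "L > 0"
  shows "Vsol r q \<sigma> \<beta> i L K \<tau>1 \<tau>2 \<tau>3 X \<tau> = exp (\<beta> * ln X) * exp (mu r q \<sigma> \<beta> * \<tau>) * ZZ (ln X) \<tau>"
proof -
  define D where "D = \<tau>3 + i\<^sup>2 * \<tau>"
  have D0: "D > 0" unfolding D_def using \<tau>3pos t by (simp add: add_pos_nonneg)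
  have DD: "D = Dd \<tau>" unfolding D_def Dd_def ..
  define a1 where "a1 = delta r q \<sigma> (X powr i / L) (\<tau>1 + i * \<tau>) (\<tau>2 + i * \<beta> * \<tau>) (\<tau>3 + i\<^sup>2 * \<tau>)"
  define a2 where "a2 = delta r q \<sigma> (X / K) \<tau> (\<beta> * \<tau>) \<tau>"
  define \<rho> where "\<rho> = i * sqrt (\<tau> / (\<tau>3 + i\<^sup>2 * \<tau>))"
  have a1eq: "a1 = a1f (ln X) \<tau>"
    unfolding a1_def delta_def a1f_def num_eq[OF X L] Dd_def ..
  have key: "(if K = 0 then Ncdf a1 else N2 a1 a2 \<rho>) = ZZ (ln X) \<tau>"
  proof (cases "K = 0")
    case True
    then show ?thesis unfolding ZZ_def Z0_def a1eq by simp
  next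
    case False
    then have Kp: "K > 0" using K0 by simp
    have sD: "sqrt D > 0" using D0 by simp
    have st: "sqrt \<tau> > 0" using t by simp
    have s3: "sqrt \<tau>3 > 0" using \<tau>3pos by simp
    have rho: "\<rho> = i * sqrt \<tau> / sqrt D" unfolding \<rho>_def D_def[symmetric] by (simp add: real_sqrt_divide)
    have rho2: "\<rho>\<^sup>2 = i\<^sup>2 * \<tau> / D" unfolding \<rho>_def D_def[symmetric] using t D0
      by (simp add: power_mult_distrib)
    have omr: "1 - \<rho>\<^sup>2 = \<tau>3 / D" unfolding rho2 using D0 unfolding D_def by (simp add: field_simps)
    have r1: "\<bar>\<rho>\<bar> < 1"
    proof -
      have "\<rho>\<^sup>2 < 1" using omr D0 \<tau>3pos by (simp add: algebra_simps) (smt (verit) divide_pos_pos)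
      then show ?thesis by (simp add: abs_square_less_1)
    qed
    have s: "sqrt (1 - \<rho>\<^sup>2) = sqrt \<tau>3 / sqrt D" unfolding omr by (simp add: real_sqrt_divide)
    have a1D: "a1 = (i * (ln X + mR * \<tau>) + A0) / (\<sigma> * sqrt D)"
      unfolding a1_def delta_def num_eq[OF X L] D_def ..
    have arg: "(a1 - \<rho> * y) / sqrt (1 - \<rho>\<^sup>2) = alf (ln X) \<tau> - kf \<tau> * y" for y
    proof -
      have "(a1 - \<rho> * y) / sqrt (1 - \<rho>\<^sup>2) = (a1 - \<rho> * y) / (sqrt \<tau>3 / sqrt D)" by (simp only: s)
      also have "\<dots> = alf (ln X) \<tau> - kf \<tau> * y"
      proof -
        have gen: "(n / (\<sigma> * v) - i * u / v * y) / (w / v) = n / (\<sigma> * w) - i * u / w * y"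
          if "v > 0" "w > 0" for v w u n using that \<sigma>pos by (simp add: field_simps)
        show ?thesis unfolding a1D rho alf_def kf_def using gen[OF sD s3] by simp
      qed
      finally show ?thesis .
    qed
    have a2eq: "a2 = a2f (ln X) \<tau>"
      unfolding a2_def delta_def a2f_def mR_def cR_def using X Kp by (simp add: ln_div algebra_simps)
    have "N2 a1 a2 \<rho> = Zp (ln X) \<tau>"
      unfolding N2_repr[OF r1] Zp_def Hf_def arg a2eq ..
    then show ?thesis unfolding ZZ_def using False by simp
  qed
  show ?thesis
    unfolding Vsol_def Let_def a1_def[symmetric] a2_def[symmetric] \<rho>_def[symmetric] key
    using X by (simp add: powr_def)
qed

end

context pdeloc
begin

lemma delta0_eq: assumes "X > 0" "L > 0"
  shows "delta r q \<sigma> (X powr i / L) \<tau>1 \<tau>2 \<tau>3 = alf (ln X) 0"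
proof -
  have "ln (X powr i / L) + (r - q - \<sigma>\<^sup>2 / 2) * \<tau>1 + \<sigma>\<^sup>2 * \<tau>2 = i * (ln X + mR * 0) + A0"
    using num_eq[OF assms, of 0] by simp
  then show ?thesis unfolding delta_def alf_def by simp
qed

lemma alf_lim: "((\<lambda>\<tau>. alf x \<tau>) \<longlongrightarrow> alf x 0) (at_right 0)"
  unfolding alf_def by (intro tendsto_intros) (use \<sigma>pos \<tau>3pos in auto)

lemma kf_lim: "(kf \<longlongrightarrow> 0) (at_right 0)"
proof -
  have "((\<lambda>\<tau>. i * sqrt \<tau> / sqrt \<tau>3) \<longlongrightarrow> i * sqrt 0 / sqrt \<tau>3) (at_right 0)"
    by (intro tendsto_intros) (use \<tau>3pos in auto)
  then show ?thesis unfolding kf_def[abs_def] by simp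
qed

lemma a2f_lim:
  assumes K: "K > 0"
  shows "ln X > ln K \<Longrightarrow> filterlim (\<lambda>\<tau>. a2f (ln X) \<tau>) at_top (at_right 0)"
    and "ln X < ln K \<Longrightarrow> filterlim (\<lambda>\<tau>. a2f (ln X) \<tau>) at_bot (at_right 0)"
proof -
  have d0: "filterlim (\<lambda>\<tau>. \<sigma> * sqrt \<tau>) (at_right 0) (at_right 0)"
  proof (rule tendsto_imp_filterlim_at_right)
    have "((\<lambda>\<tau>. \<sigma> * sqrt \<tau>) \<longlongrightarrow> \<sigma> * sqrt 0) (at_right 0)" by (intro tendsto_intros)
    then show "((\<lambda>\<tau>. \<sigma> * sqrt \<tau>) \<longlongrightarrow> 0) (at_right 0)" by simp
    show "eventually (\<lambda>\<tau>. \<sigma> * sqrt \<tau> > 0) (at_right (0::real))"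
      using eventually_at_right_less[of "0::real"] by (rule eventually_mono) (use \<sigma>pos in simp)
  qed
  have inv: "filterlim (\<lambda>\<tau>. inverse (\<sigma> * sqrt \<tau>)) at_top (at_right 0)"
    by (rule filterlim_compose[OF filterlim_inverse_at_top_right d0])
  have num: "((\<lambda>\<tau>. ln X - ln K + mR * \<tau>) \<longlongrightarrow> ln X - ln K + mR * 0) (at_right 0)"
    by (intro tendsto_intros)
  have eq: "(\<lambda>\<tau>. a2f (ln X) \<tau>) = (\<lambda>\<tau>. (ln X - ln K + mR * \<tau>) * inverse (\<sigma> * sqrt \<tau>))"
    unfolding a2f_def by (simp add: divide_inverse)
  show "ln X > ln K \<Longrightarrow> filterlim (\<lambda>\<tau>. a2f (ln X) \<tau>) at_top (at_right 0)"
    unfolding eq by (rule filterlim_tendsto_pos_mult_at_top[OF num _ inv]) simp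
  show "ln X < ln K \<Longrightarrow> filterlim (\<lambda>\<tau>. a2f (ln X) \<tau>) at_bot (at_right 0)"
    unfolding eq by (rule filterlim_tendsto_neg_mult_at_bot[OF num _ inv]) simp
qed

lemma ZZ_lim:
  assumes X: "X > 0" and XK: "X \<noteq> K" and K0: "K \<ge> 0" and L: "L > 0"
  shows "((\<lambda>\<tau>. ZZ (ln X) \<tau>) \<longlongrightarrow> Ncdf (delta r q \<sigma> (X powr i / L) \<tau>1 \<tau>2 \<tau>3) * (if X > K then 1 else 0)) (at_right 0)"
proof (cases "K = 0")
  case True
  have c: "isCont (\<lambda>\<tau>. a1f (ln X) \<tau>) 0"
    by (rule DERIV_isCont[OF d_a1f_t]) simp
  then have "((\<lambda>\<tau>. a1f (ln X) \<tau>) \<longlongrightarrow> a1f (ln X) 0) (at_right 0)"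
    by (simp add: isCont_def filterlim_at_split)
  then have "((\<lambda>\<tau>. Ncdf (a1f (ln X) \<tau>)) \<longlongrightarrow> Ncdf (a1f (ln X) 0)) (at_right 0)"
    by (rule isCont_tendsto_compose[OF DERIV_isCont[OF DERIV_Ncdf]])
  moreover have "a1f (ln X) 0 = delta r q \<sigma> (X powr i / L) \<tau>1 \<tau>2 \<tau>3"
    unfolding delta0_eq[OF X L] a1f_def alf_def Dd_def by simp
  ultimately show ?thesis unfolding ZZ_def Z0_def using True X by simp
next
  case False
  then have Kp: "K > 0" using K0 by simp
  define d0 where "d0 = delta r q \<sigma> (X powr i / L) \<tau>1 \<tau>2 \<tau>3"
  define M1 where "M1 = integral UNIV (\<lambda>y. phi y * \<bar>y\<bar>)"
  define ind where "ind = (if X > K then 1 else 0 :: real)"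
  have d0eq: "d0 = alf (ln X) 0" unfolding d0_def by (rule delta0_eq[OF X L])
  have limN: "((\<lambda>\<tau>. Ncdf (a2f (ln X) \<tau>)) \<longlongrightarrow> ind) (at_right 0)"
  proof (cases "X > K")
    case True
    then have "ln X > ln K" using Kp X by simp
    then show ?thesis unfolding ind_def using True
      by (simp add: filterlim_compose[OF Ncdf_at_top a2f_lim(1)[OF Kp]])
  next
    case False
    then have "X < K" using XK by simp
    then have "ln X < ln K" using Kp X by simp
    then show ?thesis unfolding ind_def using False
      by (simp add: filterlim_compose[OF Ncdf_at_bot a2f_lim(2)[OF Kp]])
  qed
  have limB: "((\<lambda>\<tau>. \<bar>alf (ln X) \<tau> - d0\<bar> + \<bar>kf \<tau>\<bar> * M1) \<longlongrightarrow> \<bar>d0 - d0\<bar> + \<bar>0\<bar> * M1) (at_right 0)"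
    unfolding d0eq by (intro tendsto_intros alf_lim kf_lim)
  have ev: "eventually (\<lambda>\<tau>. norm (Zp (ln X) \<tau> - Ncdf d0 * Ncdf (a2f (ln X) \<tau>)) \<le> \<bar>alf (ln X) \<tau> - d0\<bar> + \<bar>kf \<tau>\<bar> * M1) (at_right 0)"
    unfolding Zp_def M1_def by (intro always_eventually allI) (simp add: Hf_approx)
  have "((\<lambda>\<tau>. Zp (ln X) \<tau> - Ncdf d0 * Ncdf (a2f (ln X) \<tau>)) \<longlongrightarrow> 0) (at_right 0)"
    using Lim_null_comparison[OF ev] limB by simp
  then have "((\<lambda>\<tau>. (Zp (ln X) \<tau> - Ncdf d0 * Ncdf (a2f (ln X) \<tau>)) + Ncdf d0 * Ncdf (a2f (ln X) \<tau>)) \<longlongrightarrow> 0 + Ncdf d0 * ind) (at_right 0)"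
    by (intro tendsto_intros limN)
  then show ?thesis unfolding ZZ_def using False by (simp add: d0_def ind_def)
qed

end

theorem theorem1:
  fixes \<sigma> r q T \<beta> i L K \<tau>1 \<tau>2 \<tau>3 :: real
  assumes "\<sigma> > 0" and "T > 0" and "L > 0" and "K \<ge> 0" and "\<tau>3 > 0"
  defines "V \<equiv> (\<lambda>X t. Vsol r q \<sigma> \<beta> i L K \<tau>1 \<tau>2 \<tau>3 X (T - t))"
  shows "(\<forall>t\<in>{0<..<T}. \<forall>X>0. \<exists>Vt DX VXX.
            ((\<lambda>s. V X s) has_real_derivative Vt) (at t) \<and>
            (\<forall>Y>0. ((\<lambda>Z. V Z t) has_real_derivative DX Y) (at Y)) \<and>
            (DX has_real_derivative VXX) (at X) \<and>
            Vt + 1/2 * \<sigma>\<^sup>2 * X\<^sup>2 * VXX + (r - q) * X * DX X - r * V X t = 0)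
       \<and> (\<forall>X>0. X \<noteq> K \<longrightarrow>
            ((\<lambda>t. V X t) \<longlongrightarrow> payoff r q \<sigma> \<beta> i L K \<tau>1 \<tau>2 \<tau>3 X) (at_left T))"
proof -
  interpret P: pdeloc r q \<sigma> \<beta> i L K \<tau>1 \<tau>2 \<tau>3
    by unfold_locales (use assms in auto)
  let ?mu = "mu r q \<sigma> \<beta>"
  have Veq: "V X s = exp (\<beta> * ln X) * exp (?mu * (T - s)) * P.ZZ (ln X) (T - s)" if "X > 0" "s < T" for X s
    unfolding V_def using P.Vsol_eq[of X "T - s"] that assms by simp
  have part1: "\<exists>Vt DX VXX.
            ((\<lambda>s. V X s) has_real_derivative Vt) (at t) \<and>
            (\<forall>Y>0. ((\<lambda>Z. V Z t) has_real_derivative DX Y) (at Y)) \<and>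
            (DX has_real_derivative VXX) (at X) \<and>
            Vt + 1/2 * \<sigma>\<^sup>2 * X\<^sup>2 * VXX + (r - q) * X * DX X - r * V X t = 0"
    if t: "t \<in> {0<..<T}" and X: "X > 0" for t X
  proof -
    define \<tau> where "\<tau> = T - t"
    have tau: "\<tau> > 0" unfolding \<tau>_def using t by simp
    define x where "x = ln X"
    define E where "E = exp (?mu * \<tau>)"
    define eb where "eb = exp (\<beta> * x)"
    define Vt where "Vt = - eb * E * (?mu * P.ZZ x \<tau> + P.ZZt x \<tau>)"
    define DX where "DX Y = E * (exp (\<beta> * ln Y) * (\<beta> * P.ZZ (ln Y) \<tau> + P.ZZx (ln Y) \<tau>) / Y)" for Y
    define VXX where "VXX = E * eb * (\<beta>\<^sup>2 * P.ZZ x \<tau> + 2 * \<beta> * P.ZZx x \<tau> + P.ZZxx x \<tau> - \<beta> * P.ZZ x \<tau> - P.ZZx x \<tau>) / X\<^sup>2"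
    have dVt: "((\<lambda>s. V X s) has_real_derivative Vt) (at t)"
    proof -
      have z: "((\<lambda>s. P.ZZ x (T - s)) has_real_derivative P.ZZt x (T - t) * (0 - 1)) (at t)"
      proof -
        have zt: "((\<lambda>\<tau>. P.ZZ x \<tau>) has_real_derivative P.ZZt x (T - t)) (at (T - t))"
          using P.ZZ_dt[of "T - t" x] tau by (simp add: \<tau>_def)
        have g: "((\<lambda>s. T - s) has_real_derivative (0 - 1)) (at t)" by (intro DERIV_diff DERIV_const DERIV_ident)
        show ?thesis using DERIV_chain2[OF zt g] by simp
      qed
      have e: "((\<lambda>s. exp (?mu * (T - s))) has_real_derivative exp (?mu * (T - t)) * (?mu * (0 - 1))) (at t)"
        by (intro DERIV_fun_exp DERIV_cmult DERIV_diff DERIV_const DERIV_ident)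
      note D = DERIV_mult[OF DERIV_cmult[OF e, of eb] z]
      have D': "((\<lambda>s. eb * exp (?mu * (T - s)) * P.ZZ x (T - s)) has_real_derivative Vt) (at t)"
        by (rule DERIV_cong[OF D]) (simp add: Vt_def E_def \<tau>_def algebra_simps)
      show ?thesis
      proof (rule has_field_derivative_transform_within_open[OF D', of "{..<T}"])
        show "open {..<T}" by simp
        show "t \<in> {..<T}" using t by simp
        fix s assume "s \<in> {..<T}"
        then show "eb * exp (?mu * (T - s)) * P.ZZ x (T - s) = V X s"
          using Veq[OF X, of s] unfolding eb_def x_def by simp
      qed
    qed
    have dDX: "((\<lambda>Z. V Z t) has_real_derivative DX Y) (at Y)" if Y: "Y > 0" for Y
    proof -
      note Dl = DERIV_ln_divide[OF Y]
      have de: "((\<lambda>Z. exp (\<beta> * ln Z)) has_real_derivative exp (\<beta> * ln Y) * (\<beta> * (1 / Y))) (at Y)"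
        by (intro DERIV_fun_exp DERIV_cmult Dl)
      have dz: "((\<lambda>Z. P.ZZ (ln Z) \<tau>) has_real_derivative P.ZZx (ln Y) \<tau> * (1 / Y)) (at Y)"
        by (rule DERIV_chain2[OF P.ZZ_dx[OF tau] Dl])
      note D = DERIV_mult[OF DERIV_cmult_right[OF de, of E] dz]
      have D': "((\<lambda>Z. exp (\<beta> * ln Z) * E * P.ZZ (ln Z) \<tau>) has_real_derivative DX Y) (at Y)"
        by (rule DERIV_cong[OF D]) (use Y in \<open>simp add: DX_def field_simps\<close>)
      show ?thesis
      proof (rule has_field_derivative_transform_within_open[OF D', of "{0<..}"])
        show "open {0::real<..}" by simp
        show "Y \<in> {0<..}" using Y by simp
        fix Z :: real assume "Z \<in> {0<..}"
        then show "exp (\<beta> * ln Z) * E * P.ZZ (ln Z) \<tau> = V Z t"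
          using Veq[of Z t] t unfolding E_def \<tau>_def by simp
      qed
    qed
    have dVXX: "(DX has_real_derivative VXX) (at X)"
    proof -
      note Dl = DERIV_ln_divide[OF X]
      have de: "((\<lambda>Z. exp (\<beta> * ln Z)) has_real_derivative exp (\<beta> * ln X) * (\<beta> * (1 / X))) (at X)"
        by (intro DERIV_fun_exp DERIV_cmult Dl)
      have dz: "((\<lambda>Z. P.ZZ (ln Z) \<tau>) has_real_derivative P.ZZx (ln X) \<tau> * (1 / X)) (at X)"
        by (rule DERIV_chain2[OF P.ZZ_dx[OF tau] Dl])
      have dzx: "((\<lambda>Z. P.ZZx (ln Z) \<tau>) has_real_derivative P.ZZxx (ln X) \<tau> * (1 / X)) (at X)"
        by (rule DERIV_chain2[OF P.ZZx_dx[OF tau] Dl])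
      note G = DERIV_mult[OF de DERIV_add[OF DERIV_cmult[OF dz, of \<beta>] dzx]]
      note Q = DERIV_divide[OF G DERIV_ident]
      note D = DERIV_cmult[OF Q, of E]
      have "X \<noteq> 0" using X by simp
      note D1 = D[OF this]
      show ?thesis unfolding DX_def[abs_def]
        by (rule DERIV_cong[OF D1]) (use X in \<open>simp add: VXX_def eb_def x_def field_simps power2_eq_square\<close>)
    qed
    have eqn: "Vt + 1/2 * \<sigma>\<^sup>2 * X\<^sup>2 * VXX + (r - q) * X * DX X - r * V X t = 0"
    proof -
      have VX: "V X t = eb * E * P.ZZ x \<tau>" using Veq[OF X, of t] t unfolding eb_def x_def E_def \<tau>_def by simp
      have pde: "P.ZZt x \<tau> = \<sigma>\<^sup>2 / 2 * P.ZZxx x \<tau> + P.mR * P.ZZx x \<tau>" by (rule P.ZZ_pde[OF tau])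
      show ?thesis
        unfolding VX Vt_def VXX_def DX_def pde x_def[symmetric] eb_def[symmetric]
        using X by (simp add: field_simps power2_eq_square P.mR_def P.cR_def mu_def)
    qed
    show ?thesis using dVt dDX dVXX eqn by blast
  qed
  have part2: "((\<lambda>t. V X t) \<longlongrightarrow> payoff r q \<sigma> \<beta> i L K \<tau>1 \<tau>2 \<tau>3 X) (at_left T)" if X: "X > 0" "X \<noteq> K" for X
  proof -
    define lim where "lim = Ncdf (delta r q \<sigma> (X powr i / L) \<tau>1 \<tau>2 \<tau>3) * (if X > K then 1 else 0)"
    have ev: "eventually (\<lambda>t. t \<in> {T - 1<..<T}) (at_left T)" by (rule eventually_at_left_real) simp
    have f: "filterlim (\<lambda>t. T - t) (at_right 0) (at_left T)"
    proof (rule tendsto_imp_filterlim_at_right)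
      have "((\<lambda>t. T - t) \<longlongrightarrow> T - T) (at_left T)" by (intro tendsto_intros)
      then show "((\<lambda>t. T - t) \<longlongrightarrow> 0) (at_left T)" by simp
      show "eventually (\<lambda>t. T - t > 0) (at_left T)" using ev by (rule eventually_mono) simp
    qed
    have l1: "((\<lambda>t. P.ZZ (ln X) (T - t)) \<longlongrightarrow> lim) (at_left T)"
      unfolding lim_def by (rule filterlim_compose[OF P.ZZ_lim f]) (use X assms in auto)
    have l2: "((\<lambda>t. exp (?mu * (T - t))) \<longlongrightarrow> exp (?mu * (T - T))) (at_left T)"
      by (intro tendsto_intros)
    have l: "((\<lambda>t. exp (\<beta> * ln X) * exp (?mu * (T - t)) * P.ZZ (ln X) (T - t)) \<longlongrightarrow> exp (\<beta> * ln X) * exp (?mu * (T - T)) * lim) (at_left T)"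
      by (intro tendsto_intros l1 l2)
    have evV: "eventually (\<lambda>t. exp (\<beta> * ln X) * exp (?mu * (T - t)) * P.ZZ (ln X) (T - t) = V X t) (at_left T)"
      using ev by (rule eventually_mono) (use Veq[OF X(1)] in auto)
    have "((\<lambda>t. V X t) \<longlongrightarrow> exp (\<beta> * ln X) * exp (?mu * (T - T)) * lim) (at_left T)"
      using tendsto_cong[OF evV] l by simp
    moreover have "exp (\<beta> * ln X) * exp (?mu * (T - T)) * lim = payoff r q \<sigma> \<beta> i L K \<tau>1 \<tau>2 \<tau>3 X"
      unfolding payoff_def lim_def using X by (simp add: powr_def)
    ultimately show ?thesis by simp
  qed
  show ?thesis using part1 part2 by blast
qed

end
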